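(* Let $k\geq 2$, $a\in\{0,1,2\}$, and let $S$ and $\widetilde{S}$ be binary phylogenetic $X$-trees with $|X| = 2k+a$. Let $X^* = X\cup\{x,y\}$ where $x\neq y$ and $x,y\notin X$. Assume $\widetilde{S}$ can be obtained from $S$ by a series of $k$-problematic moves. Let $e_1\in E(S)$ and let $T$ be the binary phylogenetic $X^*$-tree obtained from $S$ by attaching cherry $[x,y]$ to $e_1$. Then there exists an edge $e_2\in E(\widetilde{S})$ such that the binary phylogenetic $X^*$-tree $\widetilde{T}$ obtained from $\widetilde{S}$ by attaching cherry $[x,y]$ to $e_2$ can be obtained from $T$ by a series of $(k+1)$-problematic moves.
   Context: A phylogenetic $X$-tree is a tree with no vertices of degree 2 whose leaves are bijectively labelled by (and identified with) $X$; binary means maximum degree 3; $\cong$ denotes isomorphism fixing all leaf labels. Attaching cherry $[x,y]$ to an edge $e=\{p,q\}$: subdivide $e$ by a new vertex $u$, add a new vertex $c$ with edge $\{u,c\}$, and add new leaves $x,y$ with edges $\{c,x\},\{c,y\}$. NNI move: for an inner edge $e=\{v,w\}$ (both endpoints non-leaves) of a binary tree $T$, with $v$ adjacent to $v_1,v_2$ and $w$ adjacent to $w_1,w_2$ besides each other, replace $\{v,v_1\},\{w,w_1\}$ by $\{v,w_1\},\{w,v_1\}$ (or analogously with $w_2$). Deleting $v,w$ and incident edges leaves four subtrees with leaf counts $n_1,\dots,n_4$; the NNI move defined by $e$ is $k$-problematic if $\sum_{i=1}^4\lfloor (n_i-1)/2\rfloor<k-2$. $\widetilde{S}$ can be obtained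 from $S$ by a series of $k$-problematic moves if $S\cong\widetilde{S}$ or $\widetilde{S}$ is isomorphic to a tree obtained from $S$ by a finite sequence of NNI moves each of which is $k$-problematic. *)

theory Defs
  imports Main
begin

text \<open>Finite simple graphs: a vertex set V and a set E of 2-element subsets of V.\<close>

definition edge_rel :: "'a set set \<Rightarrow> ('a \<times> 'a) set" where
  "edge_rel E = {(a, b). {a, b} \<in> E}"

definition connected_graph :: "'a set \<Rightarrow> 'a set set \<Rightarrow> bool" where
  "connected_graph V E \<longleftrightarrow> (\<forall>a\<in>V. \<forall>b\<in>V. (a, b) \<in> (edge_rel E)\<^sup>*)"

text \<open>A tree: finite connected simple graph without cycles; acyclicity is expressed
  as: the two endpoints of any edge are not connected once that edge is removed.\<close>
definition is_tree :: "'a set \<Rightarrow> 'a set set \<Rightarrow> bool" where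
  "is_tree V E \<longleftrightarrow> finite V \<and> V \<noteq> {} \<and>
     (\<forall>e\<in>E. \<exists>a b. e = {a, b} \<and> a \<noteq> b \<and> a \<in> V \<and> b \<in> V) \<and>
     connected_graph V E \<and>
     (\<forall>a b. {a, b} \<in> E \<longrightarrow> (a, b) \<notin> (edge_rel (E - {{a, b}}))\<^sup>*)"

definition degree :: "'a set set \<Rightarrow> 'a \<Rightarrow> nat" where
  "degree E v = card {e \<in> E. v \<in> e}"

definition phylo_tree :: "'a set \<Rightarrow> 'a set \<Rightarrow> 'a set set \<Rightarrow> bool" where
  "phylo_tree X V E \<longleftrightarrow> is_tree V E \<and> X \<subseteq> V \<and>
     {v \<in> V. degree E v \<le> 1} = X \<and> (\<forall>v\<in>V. degree E v \<noteq> 2)"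

definition binary_phylo_tree :: "'a set \<Rightarrow> 'a set \<Rightarrow> 'a set set \<Rightarrow> bool" where
  "binary_phylo_tree X V E \<longleftrightarrow> phylo_tree X V E \<and> (\<forall>v\<in>V. degree E v \<le> 3)"

definition iso_X :: "'a set \<Rightarrow> 'a set \<Rightarrow> 'a set set \<Rightarrow> 'a set \<Rightarrow> 'a set set \<Rightarrow> bool" where
  "iso_X X V E V' E' \<longleftrightarrow> (\<exists>f. bij_betw f V V' \<and>
     (\<forall>a\<in>V. \<forall>b\<in>V. {a, b} \<in> E \<longleftrightarrow> {f a, f b} \<in> E') \<and> (\<forall>z\<in>X. f z = z))"

text \<open>Attaching cherry [x,y] to edge e = {p,q}, using fresh vertices u (subdivision) and c.\<close>
definition attach_cherry ::
  "'a set \<Rightarrow> 'a set set \<Rightarrow> 'a set \<Rightarrow> 'a \<Rightarrow> 'a \<Rightarrow> 'a \<Rightarrow> 'a \<Rightarrow> 'a set \<Rightarrow> 'a set set \<Rightarrow> bool" where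
  "attach_cherry V E e x y u c V' E' \<longleftrightarrow> e \<in> E \<and>
     u \<notin> V \<and> c \<notin> V \<and> x \<notin> V \<and> y \<notin> V \<and> distinct [u, c, x, y] \<and>
     (\<exists>p q. e = {p, q} \<and> V' = V \<union> {u, c, x, y} \<and>
        E' = (E - {e}) \<union> {{p, u}, {u, q}, {u, c}, {c, x}, {c, y}})"

definition nni_move :: "'a set \<Rightarrow> 'a set set \<Rightarrow> 'a \<Rightarrow> 'a \<Rightarrow> 'a set set \<Rightarrow> bool" where
  "nni_move X E v w E' \<longleftrightarrow> {v, w} \<in> E \<and> v \<notin> X \<and> w \<notin> X \<and>
     (\<exists>v1 w1. {v, v1} \<in> E \<and> v1 \<noteq> w \<and> {w, w1} \<in> E \<and> w1 \<noteq> v \<and>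
        E' = (E - {{v, v1}, {w, w1}}) \<union> {{v, w1}, {w, v1}})"

definition comp_without :: "'a set set \<Rightarrow> 'a \<Rightarrow> 'a \<Rightarrow> 'a \<Rightarrow> 'a set" where
  "comp_without E v w z = {t. (z, t) \<in> {(a, b). {a, b} \<in> E \<and> a \<notin> {v, w} \<and> b \<notin> {v, w}}\<^sup>*}"

definition other_nbrs :: "'a set set \<Rightarrow> 'a \<Rightarrow> 'a \<Rightarrow> 'a set" where
  "other_nbrs E v w = {z. ({v, z} \<in> E \<or> {w, z} \<in> E) \<and> z \<notin> {v, w}}"

definition k_problematic :: "nat \<Rightarrow> 'a set \<Rightarrow> 'a set set \<Rightarrow> 'a \<Rightarrow> 'a \<Rightarrow> bool" where
  "k_problematic k X E v w \<longleftrightarrow>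
     (\<Sum>z\<in>other_nbrs E v w. (int (card (X \<inter> comp_without E v w z)) - 1) div 2) < int k - 2"

definition prob_step :: "nat \<Rightarrow> 'a set \<Rightarrow> ('a set set \<times> 'a set set) set" where
  "prob_step k X = {(E, E'). \<exists>v w. k_problematic k X E v w \<and> nni_move X E v w E'}"

definition obtainable_by_problematic ::
  "nat \<Rightarrow> 'a set \<Rightarrow> 'a set \<Rightarrow> 'a set set \<Rightarrow> 'a set \<Rightarrow> 'a set set \<Rightarrow> bool" where
  "obtainable_by_problematic k X V E V' E' \<longleftrightarrow>
     (\<exists>E''. (E, E'') \<in> (prob_step k X)\<^sup>* \<and> iso_X X V E'' V' E')"

end

theory Submission
  imports Defs
begin

lemma edge_rel_iff[simp]: "(a,b) \<in> edge_rel E \<longleftrightarrow> {a,b} \<in> E"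
  by (simp add: edge_rel_def)
lemma edge_rel_sym: "(a,b) \<in> edge_rel E \<Longrightarrow> (b,a) \<in> edge_rel E"
  by (metis edge_rel_iff insert_commute)
lemma edge_rel_conv: "(edge_rel E)\<inverse> = edge_rel E"
  using edge_rel_sym by auto
lemma rt_sym: "(a,b) \<in> (edge_rel E)\<^sup>* \<Longrightarrow> (b,a) \<in> (edge_rel E)\<^sup>*"
  by (metis edge_rel_conv rtrancl_converseI)
lemma edge_rel_mono: "E \<subseteq> F \<Longrightarrow> (edge_rel E)\<^sup>* \<subseteq> (edge_rel F)\<^sup>*"
  by (rule rtrancl_mono) (auto simp: edge_rel_def)
lemma edge_step: "{a,b} \<in> E \<Longrightarrow> (a,b) \<in> (edge_rel E)\<^sup>*"
  by auto
definition acyc :: "'a set set \<Rightarrow> bool" where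
  "acyc E \<longleftrightarrow> (\<forall>a b. {a, b} \<in> E \<longrightarrow> (a, b) \<notin> (edge_rel (E - {{a, b}}))\<^sup>*)"
lemma triangle:
  assumes "acyc E" "{a,b} \<in> E" "{b,d} \<in> E" "{a,d} \<in> E" "a \<noteq> b" "b \<noteq> d" "a \<noteq> d"
  shows False
proof -
  have "{a,b} \<in> E - {{a,d}}" "{b,d} \<in> E - {{a,d}}" using assms by (auto simp: doubleton_eq_iff)
  hence "(a,d) \<in> (edge_rel (E - {{a,d}}))\<^sup>*"
    by (meson edge_step rtrancl_trans)
  thus False using assms(1,4) unfolding acyc_def by blast
qed
definition wfg :: "'a set \<Rightarrow> 'a set set \<Rightarrow> bool" where
  "wfg V E \<longleftrightarrow> (\<forall>e\<in>E. \<exists>a b. e = {a, b} \<and> a \<noteq> b \<and> a \<in> V \<and> b \<in> V)"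
lemma tree_wfg: "is_tree V E \<Longrightarrow> wfg V E" unfolding is_tree_def wfg_def by (elim conjE)
lemma tree_acyc: "is_tree V E \<Longrightarrow> acyc E" unfolding is_tree_def acyc_def by (elim conjE)
lemma wfg_fin: "finite V \<Longrightarrow> wfg V E \<Longrightarrow> finite E"
proof -
  assume "finite V" "wfg V E"
  hence "E \<subseteq> Pow V" unfolding wfg_def by fastforce
  thus ?thesis using \<open>finite V\<close> by (simp add: finite_subset)
qed
lemma wfg_mem: "wfg V E \<Longrightarrow> {a,b} \<in> E \<Longrightarrow> a \<in> V \<and> b \<in> V \<and> a \<noteq> b"
  unfolding wfg_def by (metis doubleton_eq_iff insertI1)

definition cls :: "'a set set \<Rightarrow> 'a \<Rightarrow> 'a set" where
  "cls F a = {b. (a,b) \<in> (edge_rel F)\<^sup>*}"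

definition ncomp :: "'a set \<Rightarrow> 'a set set \<Rightarrow> nat" where
  "ncomp V F = card (cls F ` V)"

lemma cls_eq: "(a,b) \<in> (edge_rel F)\<^sup>* \<Longrightarrow> cls F a = cls F b"
proof -
  assume h: "(a,b) \<in> (edge_rel F)\<^sup>*"
  hence h2: "(b,a) \<in> (edge_rel F)\<^sup>*" by (rule rt_sym)
  show ?thesis unfolding cls_def
  proof (intro Collect_cong iffI)
    fix x assume "(a,x) \<in> (edge_rel F)\<^sup>*" thus "(b,x) \<in> (edge_rel F)\<^sup>*" using h2 by (meson rtrancl_trans)
  next
    fix x assume "(b,x) \<in> (edge_rel F)\<^sup>*" thus "(a,x) \<in> (edge_rel F)\<^sup>*" using h by (meson rtrancl_trans)
  qed
qed

lemma cls_eq_iff: "cls F a = cls F b \<longleftrightarrow> (a,b) \<in> (edge_rel F)\<^sup>*"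
proof
  assume "cls F a = cls F b"
  moreover have "b \<in> cls F b" unfolding cls_def by simp
  ultimately have "b \<in> cls F a" by simp
  thus "(a,b) \<in> (edge_rel F)\<^sup>*" unfolding cls_def by simp
qed (rule cls_eq)

lemma rt_insert_conn:
  assumes "(a,b) \<in> (edge_rel F)\<^sup>*"
  shows "(edge_rel (insert {a,b} F))\<^sup>* = (edge_rel F)\<^sup>*"
proof
  show "(edge_rel (insert {a,b} F))\<^sup>* \<subseteq> (edge_rel F)\<^sup>*"
  proof (rule rtrancl_subset_rtrancl, clarify)
    fix s t assume "(s,t) \<in> edge_rel (insert {a,b} F)"
    hence "{s,t} = {a,b} \<or> {s,t} \<in> F" by auto
    moreover have "(b,a) \<in> (edge_rel F)\<^sup>*" using assms by (rule rt_sym)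
    ultimately show "(s,t) \<in> (edge_rel F)\<^sup>*" using assms
      by (auto simp: doubleton_eq_iff)
  qed
  show "(edge_rel F)\<^sup>* \<subseteq> (edge_rel (insert {a,b} F))\<^sup>*" by (rule edge_rel_mono) auto
qed

lemma rt_insert_char:
  "(s,t) \<in> (edge_rel (insert {a,b} F))\<^sup>* \<longleftrightarrow>
    (s,t) \<in> (edge_rel F)\<^sup>* \<or> ((s,a) \<in> (edge_rel F)\<^sup>* \<and> (b,t) \<in> (edge_rel F)\<^sup>*)
     \<or> ((s,b) \<in> (edge_rel F)\<^sup>* \<and> (a,t) \<in> (edge_rel F)\<^sup>*)"
  (is "?L \<longleftrightarrow> ?R")
proof
  assume ?L thus ?R
  proof (induction rule: rtrancl_induct)
    case base thus ?case by simp
  next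
    case (step t t')
    have "{t,t'} = {a,b} \<or> {t,t'} \<in> F" using step(2) by auto
    thus ?case
    proof
      assume "{t,t'} \<in> F"
      hence "(t,t') \<in> edge_rel F" by simp
      thus ?case using step(3) by (meson rtrancl.rtrancl_into_rtrancl)
    next
      assume ab: "{t,t'} = {a,b}"
      show ?case using step(3)
      proof (elim disjE conjE)
        assume st: "(s,t) \<in> (edge_rel F)\<^sup>*"
        from ab have "(t = a \<and> t' = b) \<or> (t = b \<and> t' = a)" by (auto simp: doubleton_eq_iff)
        thus ?case using st by auto
      next
        assume "(s,a) \<in> (edge_rel F)\<^sup>*" "(b,t) \<in> (edge_rel F)\<^sup>*"
        from ab have "(t = a \<and> t' = b) \<or> (t = b \<and> t' = a)" by (auto simp: doubleton_eq_iff)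
        thus ?case
        proof
          assume "t = a \<and> t' = b" thus ?case
            using \<open>(s,a) \<in> _\<close> by auto
        next
          assume "t = b \<and> t' = a" thus ?case
            using \<open>(s,a) \<in> _\<close> by auto
        qed
      next
        assume "(s,b) \<in> (edge_rel F)\<^sup>*" "(a,t) \<in> (edge_rel F)\<^sup>*"
        from ab have "(t = a \<and> t' = b) \<or> (t = b \<and> t' = a)" by (auto simp: doubleton_eq_iff)
        thus ?case using \<open>(s,b) \<in> _\<close> by auto
      qed
    qed
  qed
next
  have sub: "(edge_rel F)\<^sup>* \<subseteq> (edge_rel (insert {a,b} F))\<^sup>*" by (rule edge_rel_mono) auto
  have ab: "(a,b) \<in> (edge_rel (insert {a,b} F))\<^sup>*" "(b,a) \<in> (edge_rel (insert {a,b} F))\<^sup>*"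
  proof -
    show a1: "(a,b) \<in> (edge_rel (insert {a,b} F))\<^sup>*" by (rule edge_step) simp
    thus "(b,a) \<in> (edge_rel (insert {a,b} F))\<^sup>*" by (rule rt_sym)
  qed
  assume ?R thus ?L
  proof (elim disjE conjE)
    assume "(s,t) \<in> (edge_rel F)\<^sup>*" thus ?L using sub by (rule subsetD[rotated])
  next
    assume h: "(s,a) \<in> (edge_rel F)\<^sup>*" "(b,t) \<in> (edge_rel F)\<^sup>*"
    hence "(s,a) \<in> (edge_rel (insert {a,b} F))\<^sup>*" "(b,t) \<in> (edge_rel (insert {a,b} F))\<^sup>*" using sub by (auto dest: subsetD)
    thus ?L using ab(1) by (meson rtrancl_trans)
  next
    assume h: "(s,b) \<in> (edge_rel F)\<^sup>*" "(a,t) \<in> (edge_rel F)\<^sup>*"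
    hence "(s,b) \<in> (edge_rel (insert {a,b} F))\<^sup>*" "(a,t) \<in> (edge_rel (insert {a,b} F))\<^sup>*" using sub by (auto dest: subsetD)
    thus ?L using ab(2) by (meson rtrancl_trans)
  qed
qed



lemma cls_empty: "cls {} a = {a}"
  unfolding cls_def edge_rel_def by simp

lemma ncomp_empty: "ncomp V {} = card V"
  unfolding ncomp_def cls_empty
  by (metis card_image inj_onI singleton_inject)

lemma ncomp_insert_conn: "(a,b) \<in> (edge_rel F)\<^sup>* \<Longrightarrow> ncomp V (insert {a,b} F) = ncomp V F"
  unfolding ncomp_def cls_def by (simp add: rt_insert_conn)

lemma card_swap2:
  assumes "finite A" "p \<in> A" "q \<in> A" "p \<noteq> q" "r \<notin> A - {p,q}"
  shows "card ((A - {p,q}) \<union> {r}) + 1 = card A"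
proof -
  have "card (A - {p,q}) = card A - 2" using assms by (simp add: card_Diff_subset)
  moreover have "card A \<ge> 2" using assms
    by (metis card_2_iff card_mono empty_subsetI insert_subset)
  ultimately show ?thesis using assms by simp
qed

lemma ncomp_insert_disconn:
  assumes fin: "finite V" and abV: "a \<in> V" "b \<in> V" and nab: "(a,b) \<notin> (edge_rel F)\<^sup>*"
  shows "ncomp V (insert {a,b} F) + 1 = ncomp V F"
proof -
  let ?R = "(edge_rel F)\<^sup>*"
  have nba: "(b,a) \<notin> ?R" using nab rt_sym by metis
  have cl: "cls (insert {a,b} F) z =
      (if (z,a) \<in> ?R \<or> (z,b) \<in> ?R then cls F a \<union> cls F b else cls F z)" for z
  proof (cases "(z,a) \<in> ?R")
    case True
    hence "(z,b) \<notin> ?R" using nab by (meson rt_sym rtrancl_trans)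
    moreover have "cls F z = cls F a" using True cls_eq by metis
    ultimately show ?thesis using True unfolding cls_def rt_insert_char
      by (auto intro: rtrancl_trans)
  next
    case False
    note F = False
    show ?thesis
    proof (cases "(z,b) \<in> ?R")
      case True
      have "cls F z = cls F b" using True cls_eq by metis
      thus ?thesis using True F unfolding cls_def rt_insert_char
        by (auto intro: rtrancl_trans)
    next
      case False
      thus ?thesis using F unfolding cls_def rt_insert_char by auto
    qed
  qed
  have neq: "cls F a \<noteq> cls F b" using nab cls_eq_iff by metis
  have img: "cls (insert {a,b} F) ` V = (cls F ` V - {cls F a, cls F b}) \<union> {cls F a \<union> cls F b}"
  proof (rule set_eqI, rule iffI)
    fix Y assume "Y \<in> cls (insert {a,b} F) ` V"
    then obtain z where z: "z \<in> V" "Y = cls (insert {a,b} F) z" by auto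
    show "Y \<in> (cls F ` V - {cls F a, cls F b}) \<union> {cls F a \<union> cls F b}"
    proof (cases "(z,a) \<in> ?R \<or> (z,b) \<in> ?R")
      case True thus ?thesis using z cl by simp
    next
      case False
      hence "cls F z \<noteq> cls F a" "cls F z \<noteq> cls F b" using cls_eq_iff by metis+
      thus ?thesis using z cl False by simp
    qed
  next
    fix Y assume Y: "Y \<in> (cls F ` V - {cls F a, cls F b}) \<union> {cls F a \<union> cls F b}"
    show "Y \<in> cls (insert {a,b} F) ` V"
    proof (cases "Y = cls F a \<union> cls F b")
      case True
      have "cls (insert {a,b} F) a = Y" using cl[of a] True by simp
      thus ?thesis using abV by (metis image_eqI)
    next
      case False
      then obtain z where z: "z \<in> V" "Y = cls F z" "cls F z \<noteq> cls F a" "cls F z \<noteq> cls F b" using Y by auto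
      hence "(z,a) \<notin> ?R" "(z,b) \<notin> ?R" using cls_eq by metis+
      hence "cls (insert {a,b} F) z = Y" using cl[of z] z by simp
      thus ?thesis using z by (metis image_eqI)
    qed
  qed
  have notin: "cls F a \<union> cls F b \<notin> cls F ` V - {cls F a, cls F b}"
  proof
    assume "cls F a \<union> cls F b \<in> cls F ` V - {cls F a, cls F b}"
    then obtain z where z: "cls F a \<union> cls F b = cls F z" "cls F z \<noteq> cls F a" by auto
    have "a \<in> cls F a" unfolding cls_def by simp
    hence "(z,a) \<in> ?R" using z(1) unfolding cls_def by auto
    hence "cls F z = cls F a" using cls_eq by metis
    thus False using z(2) by simp
  qed
  show ?thesis unfolding ncomp_def img
    using card_swap2[of "cls F ` V" "cls F a" "cls F b" "cls F a \<union> cls F b"] fin abV neq notin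
    by simp
qed

lemma ncomp_insert_ge: "finite V \<Longrightarrow> a \<in> V \<Longrightarrow> b \<in> V \<Longrightarrow> ncomp V F \<le> ncomp V (insert {a,b} F) + 1"
proof (cases "(a,b) \<in> (edge_rel F)\<^sup>*")
  case True thus ?thesis by (simp add: ncomp_insert_conn)
next
  case False
  assume "finite V" "a \<in> V" "b \<in> V"
  thus ?thesis using ncomp_insert_disconn[of V a b F] False by simp
qed

lemma ncomp_lower:
  assumes "finite F" "finite V" "wfg V F"
  shows "card V \<le> ncomp V F + card F"
  using assms
proof (induction F rule: finite_induct)
  case empty thus ?case by (simp add: ncomp_empty)
next
  case (insert e F)
  then obtain a b where e: "e = {a,b}" "a \<in> V" "b \<in> V" unfolding wfg_def by blast
  have "wfg V F" using insert(5) unfolding wfg_def by simp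
  hence "card V \<le> ncomp V F + card F" using insert by simp
  moreover have "ncomp V F \<le> ncomp V (insert e F) + 1" using e ncomp_insert_ge insert(4) by simp
  ultimately show ?case using insert(1,2) by simp
qed

lemma ncomp_acyc:
  assumes "finite V" "wfg V F" "acyc F" "G \<subseteq> F"
  shows "ncomp V G + card G = card V"
proof -
  have "finite F" using wfg_fin assms by metis
  hence "finite G" using assms(4) finite_subset by metis
  thus ?thesis using assms(4)
  proof (induction G rule: finite_induct)
    case empty thus ?case by (simp add: ncomp_empty)
  next
    case (insert e G)
    have "e \<in> F" using insert by simp
    then obtain a b where e: "e = {a,b}" "a \<in> V" "b \<in> V" using assms(2) unfolding wfg_def by blast
    have "G \<subseteq> F - {{a,b}}" using insert e by auto
    hence "(a,b) \<notin> (edge_rel G)\<^sup>*" using assms(3) \<open>e \<in> F\<close> e unfolding acyc_def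
      by (meson edge_rel_mono subsetD)
    hence "ncomp V (insert e G) + 1 = ncomp V G" using e ncomp_insert_disconn assms(1) by metis
    thus ?case using insert by simp
  qed
qed

lemma ncomp_conn:
  assumes "connected_graph V F" "V \<noteq> {}"
  shows "ncomp V F = 1"
proof -
  obtain z where z: "z \<in> V" using assms by auto
  have "\<forall>x\<in>V. cls F x = cls F z"
  proof
    fix x assume "x \<in> V"
    hence "(x,z) \<in> (edge_rel F)\<^sup>*" using assms(1) z unfolding connected_graph_def by simp
    thus "cls F x = cls F z" by (rule cls_eq)
  qed
  hence "cls F ` V = (\<lambda>_. cls F z) ` V" by (intro image_cong) simp_all
  also have "\<dots> = {cls F z}" using assms(2) by (simp add: image_constant_conv)
  finally show ?thesis unfolding ncomp_def by simp
qed

lemma tree_card: "is_tree V E \<Longrightarrow> card E + 1 = card V"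
proof -
  assume t: "is_tree V E"
  have "finite V" using t unfolding is_tree_def by simp
  hence "ncomp V E + card E = card V" using ncomp_acyc[of V E E] tree_wfg[OF t] tree_acyc[OF t] by simp
  moreover have "ncomp V E = 1" using ncomp_conn[of V E] t unfolding is_tree_def by simp
  ultimately show ?thesis by simp
qed

lemma card_acyc:
  assumes "finite V" "V \<noteq> {}" "wfg V E" "connected_graph V E" "card E + 1 = card V"
  shows "acyc E"
  unfolding acyc_def
proof (intro allI impI)
  fix a b assume ab: "{a,b} \<in> E"
  show "(a,b) \<notin> (edge_rel (E - {{a,b}}))\<^sup>*"
  proof
    assume conn: "(a,b) \<in> (edge_rel (E - {{a,b}}))\<^sup>*"
    have fE: "finite E" using wfg_fin assms by metis
    have ins: "insert {a,b} (E - {{a,b}}) = E" using ab by auto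
    have "ncomp V E = ncomp V (E - {{a,b}})" using ncomp_insert_conn[OF conn] ins by metis
    moreover have "wfg V (E - {{a,b}})" using assms(3) unfolding wfg_def by simp
    hence "card V \<le> ncomp V (E - {{a,b}}) + card (E - {{a,b}})"
      using ncomp_lower[of "E - {{a,b}}" V] fE assms(1) by simp
    moreover have "card (E - {{a,b}}) + 1 = card E" using card_Suc_Diff1[OF fE ab] by simp
    moreover have "ncomp V E = 1" by (rule ncomp_conn[OF assms(4,2)])
    ultimately show False using assms(5) by simp
  qed
qed



definition inv :: "'a set \<Rightarrow> 'a set set \<Rightarrow> bool" where
  "inv V E \<longleftrightarrow> finite V \<and> V \<noteq> {} \<and> wfg V E \<and> connected_graph V E \<and> card E + 1 = card V
     \<and> (\<forall>z. degree E z \<le> 3)"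

lemma inv_acyc: "inv V E \<Longrightarrow> acyc E"
  unfolding inv_def using card_acyc by metis

lemma inv_fin: "inv V E \<Longrightarrow> finite E"
  unfolding inv_def using wfg_fin by metis

lemma binary_inv: "binary_phylo_tree X V E \<Longrightarrow> inv V E"
proof -
  assume b: "binary_phylo_tree X V E"
  hence t: "is_tree V E" unfolding binary_phylo_tree_def phylo_tree_def by simp
  have d: "\<forall>z. degree E z \<le> 3"
  proof
    fix z show "degree E z \<le> 3"
    proof (cases "z \<in> V")
      case True thus ?thesis using b unfolding binary_phylo_tree_def by simp
    next
      case False
      have em: "{e \<in> E. z \<in> e} = {}" using tree_wfg[OF t] False unfolding wfg_def by auto
      show ?thesis unfolding degree_def em by simp
    qed
  qed
  show ?thesis unfolding inv_def using t tree_wfg[OF t] tree_card[OF t] d unfolding is_tree_def by simp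
qed

lemma nni_facts:
  assumes "wfg V E" "acyc E" "{v,w} \<in> E" "{v,v1} \<in> E" "v1 \<noteq> w" "{w,w1} \<in> E" "w1 \<noteq> v"
  shows "v \<noteq> w \<and> v1 \<noteq> v \<and> w1 \<noteq> w \<and> v1 \<noteq> w1 \<and> v \<in> V \<and> w \<in> V \<and> v1 \<in> V \<and> w1 \<in> V
     \<and> {v,w1} \<notin> E \<and> {w,v1} \<notin> E"
proof -
  have a: "v \<noteq> w" "v \<in> V" "w \<in> V" using wfg_mem[OF assms(1,3)] by auto
  have b: "v1 \<noteq> v" "v1 \<in> V" using wfg_mem[OF assms(1,4)] by auto
  have c: "w1 \<noteq> w" "w1 \<in> V" using wfg_mem[OF assms(1,6)] by auto
  have d: "v1 \<noteq> w1"
  proof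
    assume "v1 = w1"
    thus False using triangle[OF assms(2), of v w v1] assms a b c by (simp add: insert_commute)
  qed
  have e: "{v,w1} \<notin> E"
  proof
    assume "{v,w1} \<in> E"
    thus False using triangle[OF assms(2), of v w w1] assms a b c by simp
  qed
  have f: "{w,v1} \<notin> E"
  proof
    assume h: "{w,v1} \<in> E"
    have "{w,v} \<in> E" using assms(3) by (simp add: insert_commute)
    thus False using triangle[OF assms(2), of w v v1] h assms a b c by simp
  qed
  show ?thesis using a b c d e f assms by simp
qed

lemma card_nni:
  assumes "finite E" "e1 \<in> E" "e2 \<in> E" "e1 \<noteq> e2" "f1 \<notin> E" "f2 \<notin> E" "f1 \<noteq> f2"
  shows "card ((E - {e1,e2}) \<union> {f1,f2}) = card E"
proof -
  have s: "{e1,e2} \<subseteq> E" using assms by simp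
  have c2: "card {e1,e2} = 2" using assms by simp
  have "card {e1,e2} \<le> card E" using card_mono[OF assms(1) s] .
  hence "card (E - {e1,e2}) + 2 = card E" using card_Diff_subset[OF _ s] c2 by simp
  moreover have "card ((E - {e1,e2}) \<union> {f1,f2}) = card (E - {e1,e2}) + card {f1,f2}"
    using assms by (intro card_Un_disjoint) auto
  ultimately show ?thesis using assms by simp
qed

lemma filt2: "{e \<in> {a,b}. P e} = (if P a then {a} else {}) \<union> (if P b then {b} else {})"
  by auto

lemma nni_inv:
  assumes inv: "inv V E" and E': "E' = (E - {{v,v1},{w,w1}}) \<union> {{v,w1},{w,v1}}"
    and h: "{v,w} \<in> E" "{v,v1} \<in> E" "v1 \<noteq> w" "{w,w1} \<in> E" "w1 \<noteq> v"
  shows "inv V E'"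
proof -
  have wf: "wfg V E" and ac: "acyc E" and fE: "finite E" using inv inv_acyc inv_fin unfolding inv_def by auto
  note F = nni_facts[OF wf ac h]
  have e12: "{v,v1} \<noteq> {w,w1}" using F h(3,5) by (auto simp: doubleton_eq_iff)
  have f12: "{v,w1} \<noteq> {w,v1}" using F h(3,5) by (auto simp: doubleton_eq_iff)
  have cardE: "card E' = card E" unfolding E' using card_nni[OF fE h(2) h(4) e12 _ _ f12] F by simp
  have x1: "\<exists>a b. {v,w1} = {a,b} \<and> a \<noteq> b \<and> a \<in> V \<and> b \<in> V"
    by (intro exI[of _ v] exI[of _ w1]) (use F h in simp)
  have x2: "\<exists>a b. {w,v1} = {a,b} \<and> a \<noteq> b \<and> a \<in> V \<and> b \<in> V"
    by (intro exI[of _ w] exI[of _ v1]) (use F h in simp)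
  have wf': "wfg V E'" using wf x1 x2 unfolding E' wfg_def by auto
  have vwE': "{v,w} \<in> E'" using h F unfolding E' by (auto simp: doubleton_eq_iff)
  have f1: "{v,w1} \<in> E'" and f2: "{w,v1} \<in> E'" unfolding E' by auto
  have sub: "edge_rel E \<subseteq> (edge_rel E')\<^sup>*"
  proof clarify
    fix a b assume ab: "(a,b) \<in> edge_rel E"
    hence abE: "{a,b} \<in> E" by simp
    show "(a,b) \<in> (edge_rel E')\<^sup>*"
    proof (cases "{a,b} = {v,v1}")
      case True
      have "(v,w) \<in> (edge_rel E')\<^sup>*" "(w,v1) \<in> (edge_rel E')\<^sup>*" using vwE' f2 by auto
      hence p: "(v,v1) \<in> (edge_rel E')\<^sup>*" by (rule rtrancl_trans)
      show ?thesis
      proof (cases "a = v")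
        case True thus ?thesis using \<open>{a,b} = {v,v1}\<close> p by (auto simp: doubleton_eq_iff)
      next
        case False thus ?thesis using \<open>{a,b} = {v,v1}\<close> rt_sym[OF p] by (auto simp: doubleton_eq_iff)
      qed
    next
      case False
      note F1 = False
      show ?thesis
      proof (cases "{a,b} = {w,w1}")
        case True
        have "(w,v) \<in> (edge_rel E')\<^sup>*" "(v,w1) \<in> (edge_rel E')\<^sup>*" using vwE' f1 by (auto simp: insert_commute)
        hence p: "(w,w1) \<in> (edge_rel E')\<^sup>*" by (rule rtrancl_trans)
        show ?thesis
        proof (cases "a = w")
          case True thus ?thesis using \<open>{a,b} = {w,w1}\<close> p by (auto simp: doubleton_eq_iff)
        next
          case False thus ?thesis using \<open>{a,b} = {w,w1}\<close> rt_sym[OF p] by (auto simp: doubleton_eq_iff)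
        qed
      next
        case False
        hence "{a,b} \<in> E'" using F1 abE unfolding E' by simp
        thus ?thesis by auto
      qed
    qed
  qed
  have conn: "connected_graph V E'"
    using inv rtrancl_subset_rtrancl[OF sub] unfolding inv_def connected_graph_def by auto
  have deg: "degree E' z \<le> degree E z" for z
  proof -
    let ?S = "{e \<in> E. z \<in> e}"
    let ?A = "{e \<in> {{v,v1},{w,w1}}. z \<in> e}"
    let ?B = "{e \<in> {{v,w1},{w,v1}}. z \<in> e}"
    have s1: "{e \<in> E'. z \<in> e} \<subseteq> (?S - ?A) \<union> ?B" unfolding E' by auto
    have AS: "?A \<subseteq> ?S" using h by auto
    have fS: "finite ?S" using fE by simp
    have nb: "\<not> (z \<in> {v,w1} \<and> z \<in> {w,v1})" using F h(3,5) by auto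
    have Beq: "?B = (if z \<in> {v,w1} then {{v,w1}} else {}) \<union> (if z \<in> {w,v1} then {{w,v1}} else {})"
      by (rule filt2)
    have Aeq: "?A = (if z \<in> {v,v1} then {{v,v1}} else {}) \<union> (if z \<in> {w,w1} then {{w,w1}} else {})"
      by (rule filt2)
    have B1: "card ?B \<le> 1" unfolding Beq using nb by auto
    have BA: "?B \<noteq> {} \<Longrightarrow> card ?A \<ge> 1"
    proof -
      assume "?B \<noteq> {}"
      hence "z \<in> {v,w1} \<or> z \<in> {w,v1}" unfolding Beq by (auto split: if_splits)
      hence "z \<in> {v,v1} \<or> z \<in> {w,w1}" by auto
      hence "?A \<noteq> {}" unfolding Aeq by (auto split: if_splits)
      moreover have "finite ?A" by simp
      ultimately show "card ?A \<ge> 1" by (simp add: Suc_leI card_gt_0_iff)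
    qed
    have "card ?B \<le> card ?A"
    proof (cases "?B = {}")
      case True hence "card ?B = 0" by (simp only: card.empty)
      thus ?thesis by linarith
    next
      case False thus ?thesis using B1 BA by linarith
    qed
    have "card {e \<in> E'. z \<in> e} \<le> card ((?S - ?A) \<union> ?B)" using s1 fS by (intro card_mono) auto
    also have "\<dots> \<le> card (?S - ?A) + card ?B" by (rule card_Un_le)
    also have "\<dots> = card ?S - card ?A + card ?B" using AS fS by (simp add: card_Diff_subset finite_subset)
    also have "\<dots> \<le> card ?S" using \<open>card ?B \<le> card ?A\<close> card_mono[OF fS AS] by linarith
    finally show ?thesis unfolding degree_def .
  qed
  have "\<forall>z. degree E' z \<le> 3" using deg inv unfolding inv_def by (meson order_trans)
  thus ?thesis using inv cardE wf' conn unfolding inv_def by simp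
qed



definition Rl :: "'a set set \<Rightarrow> 'a \<Rightarrow> 'a \<Rightarrow> ('a \<times> 'a) set" where
  "Rl E v w = {(a, b). {a, b} \<in> E \<and> a \<notin> {v, w} \<and> b \<notin> {v, w}}"

lemma Rl_iff[simp]: "(a,b) \<in> Rl E v w \<longleftrightarrow> {a,b} \<in> E \<and> a \<notin> {v,w} \<and> b \<notin> {v,w}"
  by (simp add: Rl_def)

lemma comp_eq: "comp_without E v w z = {t. (z,t) \<in> (Rl E v w)\<^sup>*}"
  unfolding comp_without_def Rl_def by simp

lemma Rl_sym: "(a,b) \<in> (Rl E v w)\<^sup>* \<Longrightarrow> (b,a) \<in> (Rl E v w)\<^sup>*"
proof -
  have "(Rl E v w)\<inverse> = Rl E v w" by (auto simp: insert_commute)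
  moreover assume "(a,b) \<in> (Rl E v w)\<^sup>*"
  ultimately show ?thesis by (metis rtrancl_converseI)
qed

lemma comp_notvw: "z \<notin> {v,w} \<Longrightarrow> (z,t) \<in> (Rl E v w)\<^sup>* \<Longrightarrow> t \<notin> {v,w}"
  by (erule rtranclE) auto

lemma comp_sub: "wfg V E \<Longrightarrow> z \<in> V \<Longrightarrow> (z,t) \<in> (Rl E v w)\<^sup>* \<Longrightarrow> t \<in> V"
proof -
  assume wf: "wfg V E" and z: "z \<in> V" and zt: "(z,t) \<in> (Rl E v w)\<^sup>*"
  from zt show "t \<in> V"
  proof (induction rule: rtrancl_induct)
    case base thus ?case using z .
  next
    case (step a b) thus ?case using wfg_mem[OF wf, of a b] by simp
  qed
qed

lemma F1:
  assumes ac: "acyc E" and vw: "{v,w} \<in> E" and vnw: "v \<noteq> w" and z: "z1 \<notin> {v,w}" "z2 \<notin> {v,w}"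
    and p: "(z1,z2) \<in> (Rl E v w)\<^sup>*" and e1: "{v,z1} \<in> E"
    and c: "({v,z2} \<in> E \<and> z1 \<noteq> z2) \<or> {w,z2} \<in> E"
  shows False
proof -
  let ?G = "edge_rel (E - {{v,z1}})"
  have "Rl E v w \<subseteq> ?G" by (auto simp: doubleton_eq_iff)
  hence "(z1,z2) \<in> ?G\<^sup>*" using p rtrancl_mono by blast
  hence p2: "(z2,z1) \<in> ?G\<^sup>*" by (rule rt_sym)
  have "(v,z2) \<in> ?G\<^sup>*"
    using c
  proof
    assume "{v,z2} \<in> E \<and> z1 \<noteq> z2"
    hence "{v,z2} \<in> E - {{v,z1}}" by (auto simp: doubleton_eq_iff)
    thus ?thesis by (rule edge_step)
  next
    assume h: "{w,z2} \<in> E"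
    have "{v,w} \<in> E - {{v,z1}}" using vw z vnw by (auto simp: doubleton_eq_iff)
    moreover have "{w,z2} \<in> E - {{v,z1}}" using h z vnw by (auto simp: doubleton_eq_iff)
    ultimately show ?thesis by (meson edge_step rtrancl_trans)
  qed
  hence "(v,z1) \<in> ?G\<^sup>*" using p2 by (rule rtrancl_trans)
  thus False using ac e1 unfolding acyc_def by blast
qed

definition att :: "'a set set \<Rightarrow> 'a \<Rightarrow> 'a \<Rightarrow> 'a \<Rightarrow> 'a \<Rightarrow> 'a \<Rightarrow> 'a \<Rightarrow> 'a set set" where
  "att E p q u c x y = (E - {{p,q}}) \<union> {{p,u},{u,q},{u,c},{c,x},{c,y}}"

lemma att_sym: "att E p q u c x y = att E q p u c x y"
  unfolding att_def by (auto simp: insert_commute)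

definition fresh4 :: "'a set \<Rightarrow> 'a \<Rightarrow> 'a \<Rightarrow> 'a \<Rightarrow> 'a \<Rightarrow> bool" where
  "fresh4 V u c x y \<longleftrightarrow> u \<notin> V \<and> c \<notin> V \<and> x \<notin> V \<and> y \<notin> V \<and> distinct [u,c,x,y]"

lemma att_edge_cases:
  assumes "{a,b} \<in> att E p q u c x y"
  shows "({a,b} \<in> E \<and> {a,b} \<noteq> {p,q}) \<or> (a = p \<and> b = u) \<or> (a = u \<and> b = p) \<or> (a = u \<and> b = q) \<or> (a = q \<and> b = u)
     \<or> (a = u \<and> b = c) \<or> (a = c \<and> b = u) \<or> (a = c \<and> b = x) \<or> (a = x \<and> b = c) \<or> (a = c \<and> b = y) \<or> (a = y \<and> b = c)"
  using assms unfolding att_def by (auto simp: doubleton_eq_iff)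

lemma compA:
  assumes wf: "wfg V E" and fr: "fresh4 V u c x y" and pq: "{p,q} \<in> E"
    and s: "s \<in> V" "s \<notin> {v,w}"
    and st: "(s,t) \<in> (Rl (att E p q u c x y) v w)\<^sup>*"
  shows "(s,t) \<in> (Rl E v w)\<^sup>* \<or> (t \<in> {u,c,x,y} \<and> ((s,p) \<in> (Rl E v w)\<^sup>* \<or> (s,q) \<in> (Rl E v w)\<^sup>*))"
  using st
proof (induction rule: rtrancl_induct)
  case base thus ?case by simp
next
  case (step t t')
  have pqV: "p \<in> V" "q \<in> V" using wfg_mem[OF wf pq] by auto
  have uV: "u \<notin> V" "c \<notin> V" "x \<notin> V" "y \<notin> V" and dist: "u \<noteq> c" "u \<noteq> x" "u \<noteq> y" "c \<noteq> x" "c \<noteq> y" "x \<noteq> y"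
    using fr unfolding fresh4_def by auto
  have tt: "{t,t'} \<in> att E p q u c x y" "t \<notin> {v,w}" "t' \<notin> {v,w}" using step(2) by auto
  note ec = att_edge_cases[OF tt(1)]
  show ?case using step(3)
  proof
    assume IH: "(s,t) \<in> (Rl E v w)\<^sup>*"
    have tV: "t \<in> V" using comp_sub[OF wf s(1) IH] .
    show ?case
    proof (cases "{t,t'} \<in> E \<and> {t,t'} \<noteq> {p,q}")
      case True
      hence "(t,t') \<in> Rl E v w" using tt by simp
      thus ?thesis using IH by (meson rtrancl.rtrancl_into_rtrancl)
    next
      case False
      hence "(t = p \<and> t' = u) \<or> (t = q \<and> t' = u)" using ec tV uV by auto
      thus ?thesis using IH by auto
    qed
  next
    assume IH: "t \<in> {u,c,x,y} \<and> ((s,p) \<in> (Rl E v w)\<^sup>* \<or> (s,q) \<in> (Rl E v w)\<^sup>*)"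
    have tV: "t \<notin> V" using IH uV by auto
    have nE: "{t,t'} \<notin> E" using wfg_mem[OF wf] tV by blast
    show ?case
    proof (cases "t' \<in> {u,c,x,y}")
      case True thus ?thesis using IH by simp
    next
      case False
      hence t': "t = u \<and> (t' = p \<or> t' = q)" using ec nE IH by auto
      have pq1: "(p,q) \<in> Rl E v w" if "p \<notin> {v,w}" "q \<notin> {v,w}" using pq that by simp
      have pq2: "(q,p) \<in> Rl E v w" if "p \<notin> {v,w}" "q \<notin> {v,w}" using pq that by (simp add: insert_commute)
      have sp: "(s,p) \<in> (Rl E v w)\<^sup>* \<Longrightarrow> p \<notin> {v,w}" using comp_notvw s by metis
      have sq: "(s,q) \<in> (Rl E v w)\<^sup>* \<Longrightarrow> q \<notin> {v,w}" using comp_notvw s by metis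
      have "(s,t') \<in> (Rl E v w)\<^sup>*"
      proof (cases "t' = p")
        case True
        show ?thesis
        proof (cases "(s,p) \<in> (Rl E v w)\<^sup>*")
          case True thus ?thesis using \<open>t' = p\<close> by simp
        next
          case False
          hence h: "(s,q) \<in> (Rl E v w)\<^sup>*" using IH by simp
          hence "(q,p) \<in> Rl E v w" using pq2 sq tt(3) \<open>t' = p\<close> by simp
          thus ?thesis using h \<open>t' = p\<close> by (meson rtrancl.rtrancl_into_rtrancl)
        qed
      next
        case False
        hence tq: "t' = q" using t' by simp
        show ?thesis
        proof (cases "(s,q) \<in> (Rl E v w)\<^sup>*")
          case True thus ?thesis using tq by simp
        next
          case False
          hence h: "(s,p) \<in> (Rl E v w)\<^sup>*" using IH by simp
          hence "(p,q) \<in> Rl E v w" using pq1 sp tt(3) tq by simp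
          thus ?thesis using h tq by (meson rtrancl.rtrancl_into_rtrancl)
        qed
      qed
      thus ?thesis by simp
    qed
  qed
qed

lemma compB:
  assumes wf: "wfg V E" and fr: "fresh4 V u c x y" and pq: "{p,q} \<in> E"
    and st: "(u,t) \<in> (Rl (att E p q u c x y) v w)\<^sup>*"
  shows "t \<in> {u,c,x,y} \<or> (p \<notin> {v,w} \<and> (p,t) \<in> (Rl E v w)\<^sup>*) \<or> (q \<notin> {v,w} \<and> (q,t) \<in> (Rl E v w)\<^sup>*)"
  using st
proof (induction rule: rtrancl_induct)
  case base thus ?case by simp
next
  case (step t t')
  have pqV: "p \<in> V" "q \<in> V" using wfg_mem[OF wf pq] by auto
  have uV: "u \<notin> V" "c \<notin> V" "x \<notin> V" "y \<notin> V"
    using fr unfolding fresh4_def by auto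
  have tt: "{t,t'} \<in> att E p q u c x y" "t \<notin> {v,w}" "t' \<notin> {v,w}" using step(2) by auto
  note ec = att_edge_cases[OF tt(1)]
  show ?case using step(3)
  proof (elim disjE conjE)
    assume IH: "t \<in> {u,c,x,y}"
    have tV: "t \<notin> V" using IH uV by auto
    have nE: "{t,t'} \<notin> E" using wfg_mem[OF wf] tV by blast
    show ?case
    proof (cases "t' \<in> {u,c,x,y}")
      case True thus ?thesis by simp
    next
      case False
      hence "t' = p \<or> t' = q" using ec nE IH by auto
      thus ?thesis using tt(3) by auto
    qed
  next
    assume IH: "p \<notin> {v,w}" "(p,t) \<in> (Rl E v w)\<^sup>*"
    have tV: "t \<in> V" using comp_sub[OF wf pqV(1) IH(2)] .
    show ?case
    proof (cases "{t,t'} \<in> E \<and> {t,t'} \<noteq> {p,q}")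
      case True
      hence "(t,t') \<in> Rl E v w" using tt by simp
      thus ?thesis using IH by (meson rtrancl.rtrancl_into_rtrancl)
    next
      case False
      hence "t' = u" using ec tV uV by auto
      thus ?thesis by simp
    qed
  next
    assume IH: "q \<notin> {v,w}" "(q,t) \<in> (Rl E v w)\<^sup>*"
    have tV: "t \<in> V" using comp_sub[OF wf pqV(2) IH(2)] .
    show ?case
    proof (cases "{t,t'} \<in> E \<and> {t,t'} \<noteq> {p,q}")
      case True
      hence "(t,t') \<in> Rl E v w" using tt by simp
      thus ?thesis using IH by (meson rtrancl.rtrancl_into_rtrancl)
    next
      case False
      hence "t' = u" using ec tV uV by auto
      thus ?thesis by simp
    qed
  qed
qed



definition gv :: "'a set \<Rightarrow> 'a set set \<Rightarrow> 'a \<Rightarrow> 'a \<Rightarrow> 'a \<Rightarrow> int" where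
  "gv X E v w z = (int (card (X \<inter> comp_without E v w z)) - 1) div 2"

definition psum :: "'a set \<Rightarrow> 'a set set \<Rightarrow> 'a \<Rightarrow> 'a \<Rightarrow> int" where
  "psum X E v w = (\<Sum>z\<in>other_nbrs E v w. gv X E v w z)"

lemma kprob_iff: "k_problematic k X E v w \<longleftrightarrow> psum X E v w < int k - 2"
  unfolding k_problematic_def psum_def gv_def by (rule refl)

lemma Rl_swap: "Rl E w v = Rl E v w" unfolding Rl_def by (simp only: insert_commute[of w v "{}"])
lemma comp_swap: "comp_without E w v z = comp_without E v w z" unfolding comp_eq Rl_swap[of E w v] ..
lemma on_swap: "other_nbrs E w v = other_nbrs E v w" unfolding other_nbrs_def by auto
lemma psum_swap: "psum X E w v = psum X E v w"
  unfolding psum_def gv_def on_swap[of E w v] comp_swap[of E w v] ..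

lemma on_mem: "z \<in> other_nbrs E v w \<longleftrightarrow> ({v,z} \<in> E \<or> {w,z} \<in> E) \<and> z \<notin> {v,w}"
  unfolding other_nbrs_def by simp

lemma F1':
  assumes ac: "acyc E" and vw: "{v,w} \<in> E" "v \<noteq> w"
    and z: "z1 \<in> other_nbrs E v w" "z2 \<in> other_nbrs E v w" "z1 \<noteq> z2"
    and p: "(z1,z2) \<in> (Rl E v w)\<^sup>*"
  shows False
proof -
  have wv: "{w,v} \<in> E" using vw by (simp add: insert_commute)
  have p': "(z1,z2) \<in> (Rl E w v)\<^sup>*" using p Rl_swap by metis
  have zz: "z1 \<notin> {v,w}" "z2 \<notin> {v,w}" "z1 \<notin> {w,v}" "z2 \<notin> {w,v}" using z unfolding on_mem by auto
  show False
  proof (cases "{v,z1} \<in> E")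
    case True
    have "({v,z2} \<in> E \<and> z1 \<noteq> z2) \<or> {w,z2} \<in> E" using z unfolding on_mem by auto
    thus False using F1[OF ac vw(1) vw(2) zz(1,2) p True] by simp
  next
    case False
    hence "{w,z1} \<in> E" using z unfolding on_mem by auto
    moreover have "({w,z2} \<in> E \<and> z1 \<noteq> z2) \<or> {v,z2} \<in> E" using z unfolding on_mem by auto
    ultimately show False using F1[OF ac wv vw(2)[symmetric] zz(3,4) p'] by simp
  qed
qed

lemma card2: "card {a,b} \<le> 2" by (cases "a = b") auto

lemma fdiv_le: "(a::int) \<le> b + 2 * d \<Longrightarrow> d \<ge> 0 \<Longrightarrow> (a - 1) div 2 \<le> (b - 1) div 2 + d"
  by presburger

locale actx =
  fixes V :: "'a set" and E :: "'a set set" and p q u c x y :: 'a and X :: "'a set"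
  assumes inv: "inv V E" and fr: "fresh4 V u c x y" and pq: "{p,q} \<in> E" and XV: "X \<subseteq> V"
begin

abbreviation "ET \<equiv> att E p q u c x y"
abbreviation "XS \<equiv> X \<union> {x,y}"

lemma wf: "wfg V E" using inv unfolding inv_def by simp
lemma ac: "acyc E" using inv by (rule inv_acyc)
lemma finV: "finite V" using inv unfolding inv_def by simp
lemma pqV: "p \<in> V" "q \<in> V" "p \<noteq> q" using wfg_mem[OF wf pq] by auto
lemma frs: "u \<notin> V" "c \<notin> V" "x \<notin> V" "y \<notin> V" "u \<noteq> c" "u \<noteq> x" "u \<noteq> y" "c \<noteq> x" "c \<noteq> y" "x \<noteq> y"
  using fr unfolding fresh4_def by auto

lemma on_sub: "other_nbrs E v w \<subseteq> V"
  using wfg_mem[OF wf] unfolding other_nbrs_def by blast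

lemma fin_on: "finite (other_nbrs E v w)" using on_sub finV finite_subset by metis

lemma card_old:
  assumes z: "z \<in> V" "z \<notin> {v,w}"
  shows "card (XS \<inter> comp_without ET v w z) \<le> card (X \<inter> comp_without E v w z)
     + (if (z,p) \<in> (Rl E v w)\<^sup>* \<or> (z,q) \<in> (Rl E v w)\<^sup>* then 2 else 0)"
proof -
  let ?C = "comp_without E v w z"
  let ?G = "(z,p) \<in> (Rl E v w)\<^sup>* \<or> (z,q) \<in> (Rl E v w)\<^sup>*"
  have CV: "?C \<subseteq> V" using comp_sub[OF wf z(1)] unfolding comp_eq by blast
  have fC: "finite ?C" using CV finV finite_subset by metis
  have sub: "XS \<inter> comp_without ET v w z \<subseteq> (X \<inter> ?C) \<union> (if ?G then {x,y} else {})"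
  proof
    fix t assume t: "t \<in> XS \<inter> comp_without ET v w z"
    hence "(z,t) \<in> (Rl ET v w)\<^sup>*" unfolding comp_eq by simp
    note A = compA[OF wf fr pq z this]
    show "t \<in> (X \<inter> ?C) \<union> (if ?G then {x,y} else {})"
    proof (cases "(z,t) \<in> (Rl E v w)\<^sup>*")
      case True
      hence "t \<in> V" using comp_sub[OF wf z(1)] by metis
      hence "t \<in> X" using t frs by auto
      thus ?thesis using True unfolding comp_eq by simp
    next
      case False
      hence "t \<in> {u,c,x,y}" "?G" using A by auto
      thus ?thesis using t frs XV by auto
    qed
  qed
  have "card (XS \<inter> comp_without ET v w z) \<le> card ((X \<inter> ?C) \<union> (if ?G then {x,y} else {}))"
    using sub fC by (intro card_mono) auto
  also have "\<dots> \<le> card (X \<inter> ?C) + card (if ?G then {x,y} else {})" by (rule card_Un_le)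
  also have "\<dots> \<le> card (X \<inter> ?C) + (if ?G then 2 else 0)" by (auto simp: card2)
  finally show ?thesis .
qed

lemma card_u:
  assumes pvw: "p \<in> {v,w}" and qvw: "q \<notin> {v,w}"
  shows "card (XS \<inter> comp_without ET v w u) \<le> card (X \<inter> comp_without E v w q) + 2"
proof -
  let ?C = "comp_without E v w q"
  have CV: "?C \<subseteq> V" using comp_sub[OF wf pqV(2)] unfolding comp_eq by blast
  have fC: "finite ?C" using CV finV finite_subset by metis
  have sub: "XS \<inter> comp_without ET v w u \<subseteq> (X \<inter> ?C) \<union> {x,y}"
  proof
    fix t assume t: "t \<in> XS \<inter> comp_without ET v w u"
    hence "(u,t) \<in> (Rl ET v w)\<^sup>*" unfolding comp_eq by simp
    note B = compB[OF wf fr pq this]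
    show "t \<in> (X \<inter> ?C) \<union> {x,y}"
    proof (cases "t \<in> {u,c,x,y}")
      case True thus ?thesis using t frs XV by auto
    next
      case False
      hence "(q,t) \<in> (Rl E v w)\<^sup>*" using B pvw by auto
      thus ?thesis using t unfolding comp_eq by simp
    qed
  qed
  have "card (XS \<inter> comp_without ET v w u) \<le> card ((X \<inter> ?C) \<union> {x,y})"
    using sub fC by (intro card_mono) auto
  also have "\<dots> \<le> card (X \<inter> ?C) + card {x,y}" by (rule card_Un_le)
  also have "\<dots> \<le> card (X \<inter> ?C) + 2" by (auto simp: card2)
  finally show ?thesis .
qed

end



context actx begin

lemma gain_unique:
  assumes vw: "{v,w} \<in> E" "v \<noteq> w"
    and z: "z1 \<in> other_nbrs E v w" "z2 \<in> other_nbrs E v w"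
    and g1: "(z1,p) \<in> (Rl E v w)\<^sup>* \<or> (z1,q) \<in> (Rl E v w)\<^sup>*"
    and g2: "(z2,p) \<in> (Rl E v w)\<^sup>* \<or> (z2,q) \<in> (Rl E v w)\<^sup>*"
  shows "z1 = z2"
proof (rule ccontr)
  assume ne: "z1 \<noteq> z2"
  have z1n: "z1 \<notin> {v,w}" and z2n: "z2 \<notin> {v,w}" using z unfolding on_mem by auto
  obtain r1 where r1: "r1 \<in> {p,q}" "(z1,r1) \<in> (Rl E v w)\<^sup>*" using g1 by auto
  obtain r2 where r2: "r2 \<in> {p,q}" "(z2,r2) \<in> (Rl E v w)\<^sup>*" using g2 by auto
  have r1n: "r1 \<notin> {v,w}" using comp_notvw[OF z1n r1(2)] .
  have r2n: "r2 \<notin> {v,w}" using comp_notvw[OF z2n r2(2)] .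
  have "(r1,r2) \<in> (Rl E v w)\<^sup>*"
  proof (cases "r1 = r2")
    case True thus ?thesis by simp
  next
    case False
    hence "{r1,r2} = {p,q}" using r1 r2 by auto
    hence "(r1,r2) \<in> Rl E v w" using pq r1n r2n by simp
    thus ?thesis by (rule r_into_rtrancl)
  qed
  moreover have "(r2,z2) \<in> (Rl E v w)\<^sup>*" using Rl_sym[OF r2(2)] .
  ultimately have "(z1,z2) \<in> (Rl E v w)\<^sup>*" using r1(2) by (meson rtrancl_trans)
  thus False using F1'[OF ac vw z ne] by simp
qed

lemma psum_att:
  assumes vw: "{v,w} \<in> E" "{v,w} \<noteq> {p,q}"
  shows "psum XS ET v w \<le> psum X E v w + 1"
proof -
  have vV: "v \<in> V" "w \<in> V" "v \<noteq> w" using wfg_mem[OF wf vw(1)] by auto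
  define h where "h z = (if p \<in> {v,w} \<and> z = q then u else if q \<in> {v,w} \<and> z = p then u else z)" for z
  let ?ON = "other_nbrs E v w"
  define G where "G z \<longleftrightarrow> (z,p) \<in> (Rl E v w)\<^sup>* \<or> (z,q) \<in> (Rl E v w)\<^sup>*" for z
  have notboth: "\<not> (p \<in> {v,w} \<and> q \<in> {v,w})"
  proof
    assume "p \<in> {v,w} \<and> q \<in> {v,w}"
    hence "{p,q} = {v,w}" using pqV(3) by auto
    thus False using vw(2) by simp
  qed
  have ONT: "other_nbrs ET v w = h ` ?ON"
  proof (rule set_eqI, rule iffI)
    fix z' assume "z' \<in> other_nbrs ET v w"
    then obtain a where a: "a \<in> {v,w}" "{a,z'} \<in> ET" "z' \<notin> {v,w}" unfolding on_mem by auto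
    have aV: "a \<in> V" using a(1) vV by auto
    note ec = att_edge_cases[OF a(2)]
    show "z' \<in> h ` ?ON"
    proof (cases "{a,z'} \<in> E \<and> {a,z'} \<noteq> {p,q}")
      case True
      have zON: "z' \<in> ?ON" using True a unfolding on_mem by auto
      have z'V: "z' \<in> V" "a \<noteq> z'" using wfg_mem[OF wf] True by auto
      have "h z' = z'"
      proof -
        have "\<not> (p \<in> {v,w} \<and> z' = q)"
        proof
          assume h1: "p \<in> {v,w} \<and> z' = q"
          hence "a \<noteq> p" using True by auto
          hence "{a,p} = {v,w}" using h1 a(1) vV by auto
          hence "{a,p} \<in> E" using vw by simp
          thus False using triangle[OF ac, of a p q] True h1 pq pqV z'V \<open>a \<noteq> p\<close> by auto
        qed
        moreover have "\<not> (q \<in> {v,w} \<and> z' = p)"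
        proof
          assume h1: "q \<in> {v,w} \<and> z' = p"
          hence "a \<noteq> q" using True by (auto simp: insert_commute)
          hence "{a,q} = {v,w}" using h1 a(1) vV by auto
          hence "{a,q} \<in> E" using vw by simp
          moreover have "{q,p} \<in> E" using pq by (simp add: insert_commute)
          ultimately show False using triangle[OF ac, of a q p] True h1 pqV z'V \<open>a \<noteq> q\<close> by auto
        qed
        ultimately show ?thesis unfolding h_def by auto
      qed
      thus ?thesis using zON by (metis image_eqI)
    next
      case False
      hence cs: "(a = p \<and> z' = u) \<or> (a = q \<and> z' = u)" using ec aV frs by auto
      thus ?thesis
      proof
        assume "a = p \<and> z' = u"
        hence pin: "p \<in> {v,w}" using a by simp
        hence qn: "q \<notin> {v,w}" using notboth by simp
        have "q \<in> ?ON" using pin qn pq unfolding on_mem by auto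
        moreover have "h q = u" using pin unfolding h_def by auto
        ultimately show ?thesis using \<open>a = p \<and> z' = u\<close> by (metis image_eqI)
      next
        assume "a = q \<and> z' = u"
        hence qin: "q \<in> {v,w}" using a by simp
        hence pn: "p \<notin> {v,w}" using notboth by simp
        have "p \<in> ?ON" using qin pn pq unfolding on_mem by (auto simp: insert_commute)
        moreover have "h p = u" using qin pn pqV(3) unfolding h_def by auto
        ultimately show ?thesis using \<open>a = q \<and> z' = u\<close> by (metis image_eqI)
      qed
    qed
  next
    fix z' assume "z' \<in> h ` ?ON"
    then obtain z where z: "z \<in> ?ON" "z' = h z" by auto
    show "z' \<in> other_nbrs ET v w"
    proof (cases "p \<in> {v,w} \<and> z = q")
      case True
      hence "z' = u" using z unfolding h_def by auto
      moreover have "{p,u} \<in> ET" unfolding att_def by simp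
      moreover have "u \<notin> {v,w}" using vV frs by auto
      ultimately show ?thesis using True unfolding on_mem by auto
    next
      case False
      note F1 = False
      show ?thesis
      proof (cases "q \<in> {v,w} \<and> z = p")
        case True
        hence "z' = u" using z F1 unfolding h_def by auto
        moreover have "{q,u} \<in> ET" unfolding att_def by (simp add: insert_commute)
        moreover have "u \<notin> {v,w}" using vV frs by auto
        ultimately show ?thesis using True unfolding on_mem by auto
      next
        case False
        hence zz: "z' = z" using z F1 unfolding h_def by auto
        obtain a where a: "a \<in> {v,w}" "{a,z} \<in> E" "z \<notin> {v,w}" using z(1) unfolding on_mem by auto
        have "{a,z} \<noteq> {p,q}" using a F1 False by (auto simp: doubleton_eq_iff)
        hence "{a,z} \<in> ET" using a unfolding att_def by simp
        thus ?thesis using a zz unfolding on_mem by auto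
      qed
    qed
  qed
  have inj: "inj_on h ?ON"
  proof (rule inj_onI)
    fix z1 z2 assume z: "z1 \<in> ?ON" "z2 \<in> ?ON" "h z1 = h z2"
    have zV: "z1 \<in> V" "z2 \<in> V" using z on_sub by auto
    show "z1 = z2"
    proof (cases "h z1 = u")
      case True
      hence "(p \<in> {v,w} \<and> z1 = q) \<or> (q \<in> {v,w} \<and> z1 = p)" using zV frs unfolding h_def by (auto split: if_splits)
      moreover have "(p \<in> {v,w} \<and> z2 = q) \<or> (q \<in> {v,w} \<and> z2 = p)" using True z(3) zV frs unfolding h_def by (auto split: if_splits)
      ultimately show ?thesis using notboth by auto
    next
      case False
      have hz: "h t \<noteq> u \<Longrightarrow> h t = t" for t unfolding h_def by (auto split: if_splits)
      have h1: "h z1 = z1" using False by (rule hz)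
      have "h z2 \<noteq> u"
      proof
        assume h2: "h z2 = u"
        have "h z1 = u" using z(3) h2 by (rule trans)
        thus False using False by contradiction
      qed
      hence h2: "h z2 = z2" by (rule hz)
      have "z1 = h z1" by (rule sym[OF h1])
      also have "\<dots> = h z2" by (rule z(3))
      also have "\<dots> = z2" by (rule h2)
      finally show ?thesis .
    qed
  qed
  have bound: "gv XS ET v w (h z) \<le> gv X E v w z + (if G z then 1 else 0)" if zON: "z \<in> ?ON" for z
  proof -
    have zV1: "z \<in> V" using on_sub[of v w] zON by (rule subsetD)
    have zV: "z \<in> V" "z \<notin> {v,w}" using zV1 zON unfolding on_mem by auto
    have cb: "card (XS \<inter> comp_without ET v w (h z)) \<le> card (X \<inter> comp_without E v w z) + (if G z then 2 else 0)"
    proof (cases "p \<in> {v,w} \<and> z = q")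
      case True
      hence "h z = u" unfolding h_def by auto
      moreover have "G z" using True unfolding G_def by simp
      moreover have "q \<notin> {v,w}" using True notboth by simp
      ultimately show ?thesis using card_u[of v w] True by simp
    next
      case False
      note F1 = False
      show ?thesis
      proof (cases "q \<in> {v,w} \<and> z = p")
        case True
        hence hz: "h z = u" using F1 unfolding h_def by auto
        have Gz: "G z" using True unfolding G_def by simp
        have pn: "p \<notin> {v,w}" using True notboth by simp
        interpret a2: actx V E q p u c x y X
          using inv fr pq XV by unfold_locales (auto simp: insert_commute)
        have "card (XS \<inter> comp_without (att E q p u c x y) v w u) \<le> card (X \<inter> comp_without E v w p) + 2"
          using a2.card_u[of v w] True pn by simp
        thus ?thesis using hz Gz True att_sym[of E p q u c x y] by simp
      next
        case False
        hence "h z = z" using F1 unfolding h_def by auto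
        thus ?thesis using card_old[OF zV] unfolding G_def by simp
      qed
    qed
    show ?thesis unfolding gv_def
      by (rule fdiv_le) (use cb in \<open>auto split: if_splits\<close>)
  qed
  have G1: "card {z \<in> ?ON. G z} \<le> 1"
  proof -
    have "finite {z \<in> ?ON. G z}" using fin_on by simp
    moreover have "\<forall>a\<in>{z \<in> ?ON. G z}. \<forall>b\<in>{z \<in> ?ON. G z}. a = b"
      using gain_unique[OF vw(1) vV(3)] unfolding G_def by blast
    ultimately show ?thesis using card_le_Suc0_iff_eq by (metis One_nat_def)
  qed
  have "psum XS ET v w = (\<Sum>z\<in>?ON. gv XS ET v w (h z))"
    unfolding psum_def ONT using sum.reindex[OF inj] by simp
  also have "\<dots> \<le> (\<Sum>z\<in>?ON. gv X E v w z + (if G z then 1 else 0))"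
    by (rule sum_mono) (rule bound)
  also have "\<dots> = psum X E v w + (\<Sum>z\<in>?ON. (if G z then 1 else 0))"
    unfolding psum_def by (simp add: sum.distrib)
  also have "(\<Sum>z\<in>?ON. (if G z then 1 else 0)) = (\<Sum>z\<in>{z \<in> ?ON. G z}. (1::int))"
    using sum.inter_filter[OF fin_on, where P=G and g="\<lambda>_. (1::int)"] by simp
  also have "\<dots> = int (card {z \<in> ?ON. G z})" by simp
  finally show ?thesis using G1 by linarith
qed

end



lemma div_bound2:
  fixes n :: int and m :: "'b \<Rightarrow> int"
  assumes "finite B" "card B \<le> 2" "n \<le> (\<Sum>z\<in>B. m z)" "\<forall>z\<in>B. m z \<ge> 0"
  shows "(n - 1) div 2 \<le> (\<Sum>z\<in>B. (m z - 1) div 2) + 1"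
proof -
  have "card B = 0 \<or> card B = 1 \<or> card B = 2" using assms(2) by auto
  thus ?thesis
  proof (elim disjE)
    assume "card B = 0" hence "B = {}" using assms(1) by simp
    thus ?thesis using assms(3) by simp
  next
    assume "card B = 1" then obtain b where "B = {b}" by (auto simp: card_Suc_eq)
    thus ?thesis using assms(3) by (simp; presburger)
  next
    assume "card B = 2" then obtain b1 b2 where "B = {b1,b2}" "b1 \<noteq> b2" by (auto simp: card_Suc_eq numeral_2_eq_2)
    thus ?thesis using assms(3,4) by (simp; presburger)
  qed
qed

context actx begin

lemma compC:
  assumes st: "(c,t) \<in> (Rl ET p u)\<^sup>*"
  shows "t \<in> {c,x,y}"
  using st
proof (induction rule: rtrancl_induct)
  case base thus ?case by simp
next
  case (step t t')
  have tt: "{t,t'} \<in> ET" "t \<notin> {p,u}" "t' \<notin> {p,u}" using step(2) by auto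
  have tV: "t \<notin> V" using step(3) frs by auto
  have nE: "{t,t'} \<notin> E" using wfg_mem[OF wf] tV by blast
  note ec = att_edge_cases[OF tt(1)]
  show ?case using ec nE tt step(3) pqV frs by auto
qed

lemma compD:
  assumes z: "{p,z} \<in> E" "z \<noteq> q" and st: "(z,t) \<in> (Rl ET p u)\<^sup>*"
  shows "(z,t) \<in> (Rl E p q)\<^sup>*"
  using st
proof (induction rule: rtrancl_induct)
  case base thus ?case by simp
next
  case (step t t')
  have zV: "z \<in> V" "z \<noteq> p" using wfg_mem[OF wf z(1)] by auto
  have zn: "z \<notin> {p,q}" using zV z by auto
  have tV: "t \<in> V" using comp_sub[OF wf zV(1) step(3)] .
  have tn: "t \<notin> {p,q}" using comp_notvw[OF zn step(3)] .
  have tt: "{t,t'} \<in> ET" "t \<notin> {p,u}" "t' \<notin> {p,u}" using step(2) by auto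
  note ec = att_edge_cases[OF tt(1)]
  have Et: "{t,t'} \<in> E" using ec tV tn frs by auto
  show ?case
  proof (cases "t' = q")
    case True
    have "{q,t} \<in> E" using Et True by (simp add: insert_commute)
    thus ?thesis using F1[OF ac pq pqV(3) zn tn step(3) z(1)] by simp
  next
    case False
    hence "(t,t') \<in> Rl E p q" using Et tn tt(3) by simp
    thus ?thesis using step(3) by (meson rtrancl.rtrancl_into_rtrancl)
  qed
qed

lemma compE:
  assumes st: "(q,t) \<in> (Rl ET p u)\<^sup>*"
  shows "t = q \<or> (\<exists>z. {q,z} \<in> E \<and> z \<noteq> p \<and> (z,t) \<in> (Rl E p q)\<^sup>*)"
  using st
proof (induction rule: rtrancl_induct)
  case base thus ?case by simp
next
  case (step t t')
  have tt: "{t,t'} \<in> ET" "t \<notin> {p,u}" "t' \<notin> {p,u}" using step(2) by auto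
  note ec = att_edge_cases[OF tt(1)]
  show ?case using step(3)
  proof
    assume tq: "t = q"
    hence Et: "{q,t'} \<in> E" using ec tt frs pqV by auto
    hence "t' \<noteq> q" using wfg_mem[OF wf] by auto
    thus ?case using Et tt(3) by auto
  next
    assume "\<exists>z. {q,z} \<in> E \<and> z \<noteq> p \<and> (z,t) \<in> (Rl E p q)\<^sup>*"
    then obtain z where z: "{q,z} \<in> E" "z \<noteq> p" "(z,t) \<in> (Rl E p q)\<^sup>*" by blast
    have zV: "z \<in> V" "z \<noteq> q" using wfg_mem[OF wf z(1)] by auto
    have zn: "z \<notin> {p,q}" using zV z by auto
    have tV: "t \<in> V" using comp_sub[OF wf zV(1) z(3)] .
    have tn: "t \<notin> {p,q}" using comp_notvw[OF zn z(3)] .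
    have Et: "{t,t'} \<in> E" using ec tV tn frs by auto
    show ?case
    proof (cases "t' = q")
      case True thus ?thesis by simp
    next
      case False
      hence "(t,t') \<in> Rl E p q" using Et tn tt(3) by simp
      hence "(z,t') \<in> (Rl E p q)\<^sup>*" using z(3) by (meson rtrancl.rtrancl_into_rtrancl)
      thus ?thesis using z by auto
    qed
  qed
qed

end



context actx begin

lemma psum_reloc:
  assumes qX: "q \<notin> X"
  shows "psum XS ET p u \<le> psum X E p q + 1"
proof -
  define A where "A = {z. {p,z} \<in> E \<and> z \<noteq> q}"
  define B where "B = {z. {q,z} \<in> E \<and> z \<noteq> p}"
  have AV: "A \<subseteq> V" "B \<subseteq> V" unfolding A_def B_def using wfg_mem[OF wf] by auto
  have fA: "finite A" "finite B" using AV finV finite_subset by metis+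
  have qA: "q \<notin> A" "c \<notin> A" "q \<noteq> c" using AV frs pqV unfolding A_def by auto
  have nl: "{a} \<notin> E" for a using wfg_mem[OF wf, of a a] by auto
  have pA: "p \<notin> A" "p \<notin> B" "q \<notin> B" unfolding A_def B_def using nl by auto
  have ONT: "other_nbrs ET p u = A \<union> {q,c}"
  proof (rule set_eqI, rule iffI)
    fix z assume z: "z \<in> other_nbrs ET p u"
    hence zz: "{p,z} \<in> ET \<or> {u,z} \<in> ET" "z \<notin> {p,u}" unfolding on_mem by auto
    show "z \<in> A \<union> {q,c}" using zz(1)
    proof
      assume "{p,z} \<in> ET"
      note ec = att_edge_cases[OF this]
      hence "{p,z} \<in> E \<and> {p,z} \<noteq> {p,q}" using zz(2) pqV frs by auto
      thus ?thesis unfolding A_def by auto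
    next
      assume "{u,z} \<in> ET"
      note ec = att_edge_cases[OF this]
      have "{u,z} \<notin> E" using wfg_mem[OF wf] frs by blast
      thus ?thesis using ec zz(2) pqV frs by auto
    qed
  next
    fix z assume z: "z \<in> A \<union> {q,c}"
    show "z \<in> other_nbrs ET p u"
    proof (cases "z \<in> A")
      case True
      hence e: "{p,z} \<in> E" "z \<noteq> q" unfolding A_def by auto
      hence "{p,z} \<in> ET" unfolding att_def by (auto simp: doubleton_eq_iff)
      moreover have "z \<notin> {p,u}" using True AV pA frs by auto
      ultimately show ?thesis unfolding on_mem by auto
    next
      case False
      hence "z = q \<or> z = c" using z by auto
      moreover have "{u,q} \<in> ET" "{u,c} \<in> ET" unfolding att_def by auto
      moreover have "q \<notin> {p,u}" "c \<notin> {p,u}" using pqV frs by auto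
      ultimately show ?thesis unfolding on_mem by auto
    qed
  qed
  have ONE: "other_nbrs E p q = A \<union> B"
  proof (rule set_eqI)
    fix z
    have "z \<in> A \<Longrightarrow> z \<notin> {p,q}" using pA qA by auto
    moreover have "z \<in> B \<Longrightarrow> z \<notin> {p,q}" using pA by auto
    ultimately show "z \<in> other_nbrs E p q \<longleftrightarrow> z \<in> A \<union> B" unfolding on_mem A_def B_def by auto
  qed
  have AB: "A \<inter> B = {}"
  proof (rule ccontr)
    assume "A \<inter> B \<noteq> {}"
    then obtain z where z: "{p,z} \<in> E" "z \<noteq> q" "{q,z} \<in> E" "z \<noteq> p" unfolding A_def B_def by auto
    have "{z,q} \<in> E" using z(3) by (simp add: insert_commute)
    thus False using triangle[OF ac z(1) _ pq] z pqV by auto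
  qed
  have cB: "card B \<le> 2"
  proof -
    have "(\<lambda>z. {q,z}) ` B \<subseteq> {e \<in> E. q \<in> e} - {{p,q}}" unfolding B_def by (auto simp: doubleton_eq_iff)
    moreover have "inj_on (\<lambda>z. {q,z}) B" by (rule inj_onI) (auto simp: doubleton_eq_iff)
    ultimately have "card B \<le> card ({e \<in> E. q \<in> e} - {{p,q}})"
      using inv_fin[OF inv] by (metis (no_types, lifting) card_image card_mono finite_Diff finite_subset mem_Collect_eq subsetI)
    also have "\<dots> = degree E q - 1" unfolding degree_def using pq inv_fin[OF inv] by (simp add: card_Diff_singleton)
    also have "\<dots> \<le> 2" using inv unfolding inv_def by (metis diff_le_mono numeral_3_eq_3 diff_Suc_1 numeral_2_eq_2)
    finally show ?thesis .
  qed
  have gA: "gv XS ET p u z \<le> gv X E p q z" if "z \<in> A" for z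
  proof -
    have z: "{p,z} \<in> E" "z \<noteq> q" "z \<in> V" using that AV unfolding A_def by auto
    have CV: "comp_without E p q z \<subseteq> V" using comp_sub[OF wf z(3)] unfolding comp_eq by blast
    have "XS \<inter> comp_without ET p u z \<subseteq> X \<inter> comp_without E p q z"
    proof
      fix t assume t: "t \<in> XS \<inter> comp_without ET p u z"
      hence "t \<in> comp_without E p q z" using compD[OF z(1,2)] unfolding comp_eq by auto
      moreover hence "t \<in> V" using CV by auto
      ultimately show "t \<in> X \<inter> comp_without E p q z" using t frs by auto
    qed
    moreover have "finite (X \<inter> comp_without E p q z)" using CV finV finite_subset by blast
    ultimately have "card (XS \<inter> comp_without ET p u z) \<le> card (X \<inter> comp_without E p q z)" by (rule card_mono[rotated])
    thus ?thesis unfolding gv_def by (intro zdiv_mono1) auto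
  qed
  have gc: "gv XS ET p u c \<le> 0"
  proof -
    have "XS \<inter> comp_without ET p u c \<subseteq> {x,y}" using compC frs XV unfolding comp_eq by auto
    hence "card (XS \<inter> comp_without ET p u c) \<le> card {x,y}" by (intro card_mono) auto
    hence "card (XS \<inter> comp_without ET p u c) \<le> 2" using card2[of x y] by linarith
    thus ?thesis unfolding gv_def by presburger
  qed
  have gq: "gv XS ET p u q \<le> (\<Sum>z\<in>B. gv X E p q z) + 1"
  proof -
    have sub: "XS \<inter> comp_without ET p u q \<subseteq> (\<Union>z\<in>B. X \<inter> comp_without E p q z)"
    proof
      fix t assume t: "t \<in> XS \<inter> comp_without ET p u q"
      have "t \<noteq> q" using t qX pqV frs by auto
      hence "\<exists>z. {q,z} \<in> E \<and> z \<noteq> p \<and> (z,t) \<in> (Rl E p q)\<^sup>*" using compE t unfolding comp_eq by auto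
      then obtain z where z: "z \<in> B" "(z,t) \<in> (Rl E p q)\<^sup>*" unfolding B_def by auto
      have "t \<in> V" using comp_sub[OF wf _ z(2)] z(1) AV by auto
      hence "t \<in> X" using t frs by auto
      thus "t \<in> (\<Union>z\<in>B. X \<inter> comp_without E p q z)" using z unfolding comp_eq by auto
    qed
    have fC: "finite (X \<inter> comp_without E p q z)" if "z \<in> B" for z
    proof -
      have "comp_without E p q z \<subseteq> V" using comp_sub[OF wf] that AV unfolding comp_eq by blast
      thus ?thesis using finV finite_subset by blast
    qed
    have "card (XS \<inter> comp_without ET p u q) \<le> card (\<Union>z\<in>B. X \<inter> comp_without E p q z)"
    proof (rule card_mono[OF _ sub])
      show "finite (\<Union>z\<in>B. X \<inter> comp_without E p q z)" using fA(2) fC by (rule finite_UN_I)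
    qed
    also have "\<dots> \<le> (\<Sum>z\<in>B. card (X \<inter> comp_without E p q z))" by (rule card_UN_le[OF fA(2)])
    finally have cn: "card (XS \<inter> comp_without ET p u q) \<le> (\<Sum>z\<in>B. card (X \<inter> comp_without E p q z))" .
    have i1: "int (card (XS \<inter> comp_without ET p u q)) \<le> int (\<Sum>z\<in>B. card (X \<inter> comp_without E p q z))"
      using cn by (simp only: of_nat_le_iff)
    have i2: "int (\<Sum>z\<in>B. card (X \<inter> comp_without E p q z)) = (\<Sum>z\<in>B. int (card (X \<inter> comp_without E p q z)))"
      by (rule of_nat_sum)
    have "(int (card (XS \<inter> comp_without ET p u q)) - 1) div 2 \<le> (\<Sum>z\<in>B. (int (card (X \<inter> comp_without E p q z)) - 1) div 2) + 1"
      using div_bound2[OF fA(2) cB, of "int (card (XS \<inter> comp_without ET p u q))" "\<lambda>z. int (card (X \<inter> comp_without E p q z))"] i1 i2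
      by simp
    thus ?thesis unfolding gv_def .
  qed
  have "psum XS ET p u = (\<Sum>z\<in>A. gv XS ET p u z) + gv XS ET p u q + gv XS ET p u c"
    unfolding psum_def ONT using fA qA by (simp add: sum.union_disjoint)
  also have "\<dots> \<le> (\<Sum>z\<in>A. gv X E p q z) + ((\<Sum>z\<in>B. gv X E p q z) + 1) + 0"
    using sum_mono[of A "gv XS ET p u" "gv X E p q", OF gA] gq gc by linarith
  also have "\<dots> = psum X E p q + 1"
    unfolding psum_def ONE using fA AB by (simp add: sum.union_disjoint)
  finally show ?thesis .
qed

end



lemma set_swap: "a \<notin> B \<Longrightarrow> N \<inter> R = {} \<Longrightarrow> (A - R \<union> B) - {a} \<union> N = ((A - {a}) \<union> N) - R \<union> B"
  by blast

lemma setB: "f2 \<notin> E \<Longrightarrow> f1 \<noteq> f2 \<Longrightarrow> n1 \<notin> E \<Longrightarrow> n1 \<notin> M \<Longrightarrow> b \<notin> M \<Longrightarrow>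
   ((E - {a,b}) \<union> {f1,f2}) - {f2} \<union> insert n2 M = ((E - {a}) \<union> insert n1 M) - {n1,b} \<union> {f1,n2}"
  by blast

context actx begin

lemma XSV: "z \<in> V \<Longrightarrow> z \<notin> X \<Longrightarrow> z \<notin> XS" using frs by auto

lemma step_b:
  assumes h: "{p,w} \<in> E" "q \<noteq> w" "{w,w1} \<in> E" "w1 \<noteq> p" "p \<notin> X" "w \<notin> X"
    and kp: "psum X E p w < int k - 2"
    and E': "E' = (E - {{p,q},{w,w1}}) \<union> {{p,w1},{w,q}}"
  shows "(ET, att E' w q u c x y) \<in> prob_step (k+1) XS" "{w,q} \<in> E'"
proof -
  note F = nni_facts[OF wf ac h(1) pq h(2) h(3) h(4)]
  have F1: "p \<noteq> w" and F2: "q \<noteq> p" and F3: "w1 \<noteq> w" and F4: "q \<noteq> w1" and F5: "p \<in> V"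
    and F6: "w \<in> V" and F7: "q \<in> V" and F8: "w1 \<in> V" and F9: "{p,w1} \<notin> E" and F10: "{w,q} \<notin> E"
    using F by simp_all
  have pvw: "{p,w} \<noteq> {p,q}" using h(2) by (auto simp: doubleton_eq_iff)
  have ps: "psum XS ET p w \<le> psum X E p w + 1" using psum_att[OF h(1) pvw] .
  have kp': "k_problematic (k+1) XS ET p w" unfolding kprob_iff using ps kp by linarith
  have ww1: "{w,w1} \<noteq> {p,q}" using F h by (auto simp: doubleton_eq_iff)
  have m1: "{p,w} \<in> ET" using h(1) pvw unfolding att_def by simp
  have m2: "{p,u} \<in> ET" "{w,w1} \<in> ET" using h(3) ww1 unfolding att_def by auto
  have nX: "p \<notin> XS" "w \<notin> XS" using XSV F h by auto
  have uw: "u \<noteq> w" using F frs by auto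
  have Vp: "\<forall>e\<in>{{u,q},{u,c},{c,x},{c,y}}. \<not> e \<subseteq> V" using frs by auto
  have bV: "{w,w1} \<subseteq> V" using F by simp
  have puM: "{p,u} \<notin> {{u,q},{u,c},{c,x},{c,y}}" using frs pqV by (auto simp: doubleton_eq_iff)
  have puE: "{p,u} \<notin> E" using wfg_mem[OF wf, of p u] frs by auto
  have f12: "{p,w1} \<noteq> {w,q}" using F1 F2 by (simp add: doubleton_eq_iff)
  have bM: "{w,w1} \<notin> {{u,q},{u,c},{c,x},{c,y}}"
  proof
    assume "{w,w1} \<in> {{u,q},{u,c},{c,x},{c,y}}"
    hence "\<not> {w,w1} \<subseteq> V" using Vp by (rule bspec[rotated])
    thus False using bV by contradiction
  qed
  have eq: "att E' w q u c x y = (ET - {{p,u},{w,w1}}) \<union> {{p,w1},{w,u}}"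
    unfolding att_def E'
    by (rule setB[OF F10 f12 puE puM bM])
  have "nni_move XS ET p w (att E' w q u c x y)"
    unfolding nni_move_def using m1 m2 nX uw h(4) eq by blast
  thus "(ET, att E' w q u c x y) \<in> prob_step (k+1) XS" unfolding prob_step_def using kp' by blast
  show "{w,q} \<in> E'" unfolding E' by simp
qed

end



lemma setD: "a \<in> E \<Longrightarrow> a \<noteq> b \<Longrightarrow> m \<notin> E \<Longrightarrow> n \<noteq> b \<Longrightarrow> n \<noteq> m \<Longrightarrow> b \<notin> M \<Longrightarrow> m \<notin> M \<Longrightarrow>
  (E - {b}) \<union> insert n (insert r M) = ((E - {a}) \<union> insert n (insert m M)) - {b,m} \<union> {a,r}"
  by blast

context actx begin

lemma step_a:
  assumes h: "{v,w} \<in> E" "{v,v1} \<in> E" "v1 \<noteq> w" "{w,w1} \<in> E" "w1 \<noteq> v" "v \<notin> X" "w \<notin> X"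
    and kp: "psum X E v w < int k - 2"
    and E': "E' = (E - {{v,v1},{w,w1}}) \<union> {{v,w1},{w,v1}}"
    and npq: "{p,q} \<noteq> {v,w}" "{p,q} \<noteq> {v,v1}" "{p,q} \<noteq> {w,w1}"
  shows "(ET, att E' p q u c x y) \<in> prob_step (k+1) XS" "{p,q} \<in> E'"
proof -
  note F = nni_facts[OF wf ac h(1-5)]
  have F5: "v \<in> V" and F6: "w \<in> V" and F7: "v1 \<in> V" and F8: "w1 \<in> V" and F9: "{v,w1} \<notin> E" and F10: "{w,v1} \<notin> E"
    using F by simp_all
  have ps: "psum XS ET v w \<le> psum X E v w + 1" using psum_att[OF h(1)] npq(1) by metis
  have kp': "k_problematic (k+1) XS ET v w" unfolding kprob_iff using ps kp by linarith
  have m1: "{v,w} \<in> ET" "{v,v1} \<in> ET" "{w,w1} \<in> ET" using h npq unfolding att_def by auto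
  have nX: "v \<notin> XS" "w \<notin> XS" using XSV F5 F6 h by auto
  have Vp: "\<forall>e\<in>{{p,u},{u,q},{u,c},{c,x},{c,y}}. \<not> e \<subseteq> V" using frs by auto
  have NR: "{{p,u},{u,q},{u,c},{c,x},{c,y}} \<inter> {{v,v1},{w,w1}} = {}"
  proof (rule ccontr)
    assume "{{p,u},{u,q},{u,c},{c,x},{c,y}} \<inter> {{v,v1},{w,w1}} \<noteq> {}"
    then obtain e where e: "e \<in> {{p,u},{u,q},{u,c},{c,x},{c,y}}" "e \<in> {{v,v1},{w,w1}}" by blast
    from e(2) have "e \<subseteq> V" using F5 F6 F7 F8 by auto
    thus False using Vp e(1) by blast
  qed
  have aB: "{p,q} \<notin> {{v,w1},{w,v1}}" using pq F9 F10 by auto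
  have eq: "att E' p q u c x y = (ET - {{v,v1},{w,w1}}) \<union> {{v,w1},{w,v1}}"
    unfolding att_def E' by (rule set_swap[OF aB NR])
  have "nni_move XS ET v w (att E' p q u c x y)"
    unfolding nni_move_def using m1 nX h(3,5) eq by blast
  thus "(ET, att E' p q u c x y) \<in> prob_step (k+1) XS" unfolding prob_step_def using kp' by blast
  show "{p,q} \<in> E'" unfolding E' using pq npq by auto
qed

lemma step_d:
  assumes h: "{p,v1} \<in> E" "v1 \<noteq> q" "p \<notin> X" "q \<notin> X"
    and kp: "psum X E p q < int k - 2"
  shows "(ET, att E p v1 u c x y) \<in> prob_step (k+1) XS"
proof -
  have v1V: "v1 \<in> V" "p \<noteq> v1" using wfg_mem[OF wf h(1)] by auto
  have ps: "psum XS ET p u \<le> psum X E p q + 1" using psum_reloc[OF h(4)] .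
  have kp': "k_problematic (k+1) XS ET p u" unfolding kprob_iff using ps kp by linarith
  have ne: "{p,v1} \<noteq> {p,q}" using h(2) by (auto simp: doubleton_eq_iff)
  have m1: "{p,u} \<in> ET" "{p,v1} \<in> ET" "{u,q} \<in> ET" using h(1) ne unfolding att_def by auto
  have nX: "p \<notin> XS" "u \<notin> XS" using XSV pqV h frs XV by auto
  have uv1: "v1 \<noteq> u" "q \<noteq> p" using v1V frs pqV by auto
  have mE: "{u,q} \<notin> E" using wfg_mem[OF wf, of u q] frs by auto
  have npb: "{p,u} \<noteq> {p,v1}" using v1V frs by (auto simp: doubleton_eq_iff)
  have npm: "{p,u} \<noteq> {u,q}" using pqV by (auto simp: doubleton_eq_iff)
  have bM: "{p,v1} \<notin> {{u,c},{c,x},{c,y}}" using pqV v1V frs by (auto simp: doubleton_eq_iff)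
  have mM: "{u,q} \<notin> {{u,c},{c,x},{c,y}}" using pqV frs by (auto simp: doubleton_eq_iff)
  have eq: "att E p v1 u c x y = (ET - {{p,v1},{u,q}}) \<union> {{p,q},{u,v1}}"
    unfolding att_def by (rule setD[OF pq ne[symmetric] mE npb npm bM mM])
  have "nni_move XS ET p u (att E p v1 u c x y)"
    unfolding nni_move_def using m1 nX uv1 eq by blast
  thus ?thesis unfolding prob_step_def using kp' by blast
qed

end



context actx begin

lemma step_all:
  assumes h: "{v,w} \<in> E" "{v,v1} \<in> E" "v1 \<noteq> w" "{w,w1} \<in> E" "w1 \<noteq> v" "v \<notin> X" "w \<notin> X"
    and kp: "psum X E v w < int k - 2"
    and E': "E' = (E - {{v,v1},{w,w1}}) \<union> {{v,w1},{w,v1}}"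
  shows "\<exists>p' q'. {p',q'} \<in> E' \<and> (ET, att E' p' q' u c x y) \<in> (prob_step (k+1) XS)\<^sup>*"
proof -
  have ETs: "ET = att E a b u c x y" if "{p,q} = {a,b}" for a b
    using that att_sym[of E p q u c x y] by (auto simp: doubleton_eq_iff)
  interpret A2: actx V E v v1 u c x y X using inv fr h(2) XV by unfold_locales
  have sb: "(att E v v1 u c x y, att E' w v1 u c x y) \<in> prob_step (k+1) XS" "{w,v1} \<in> E'"
    using A2.step_b[OF h(1) h(3) h(4) h(5) h(6) h(7) kp E'] by auto
  show ?thesis
  proof (cases "{p,q} = {v,w}")
    case True
    interpret A1: actx V E v w u c x y X using inv fr h(1) XV by unfold_locales
    have r1: "(att E v w u c x y, att E v v1 u c x y) \<in> prob_step (k+1) XS"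
      using A1.step_d[OF h(2) h(3) h(6) h(7) kp] .
    have "(att E v w u c x y, att E' w v1 u c x y) \<in> (prob_step (k+1) XS)\<^sup>*"
      using r1 r_into_rtrancl[OF sb(1)] by (rule converse_rtrancl_into_rtrancl)
    hence "(ET, att E' w v1 u c x y) \<in> (prob_step (k+1) XS)\<^sup>*"
      unfolding ETs[OF True] .
    thus ?thesis using sb(2) by blast
  next
    case False
    note n1 = False
    show ?thesis
    proof (cases "{p,q} = {v,v1}")
      case True
      have "(ET, att E' w v1 u c x y) \<in> (prob_step (k+1) XS)\<^sup>*"
        unfolding ETs[OF True] by (rule r_into_rtrancl[OF sb(1)])
      thus ?thesis using sb(2) by blast
    next
      case False
      note n2 = False
      show ?thesis
      proof (cases "{p,q} = {w,w1}")
        case True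
        interpret A3: actx V E w w1 u c x y X using inv fr h(4) XV by unfold_locales
        have wv: "{w,v} \<in> E" using h(1) by (simp add: insert_commute)
        have kp2: "psum X E w v < int k - 2" using kp psum_swap by metis
        have E2: "E' = (E - {{w,w1},{v,v1}}) \<union> {{w,v1},{v,w1}}" unfolding E' by (simp add: insert_commute)
        have r3: "(att E w w1 u c x y, att E' v w1 u c x y) \<in> prob_step (k+1) XS" "{v,w1} \<in> E'"
          using A3.step_b[OF wv h(5) h(2) h(3) h(7) h(6) kp2 E2] by auto
        have "(ET, att E' v w1 u c x y) \<in> (prob_step (k+1) XS)\<^sup>*"
          unfolding ETs[OF True] by (rule r_into_rtrancl[OF r3(1)])
        thus ?thesis using r3(2) by blast
      next
        case False
        have r4: "(ET, att E' p q u c x y) \<in> prob_step (k+1) XS" "{p,q} \<in> E'"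
          using step_a[OF h kp E' n1 n2 False] by auto
        thus ?thesis using r_into_rtrancl[OF r4(1)] by blast
      qed
    qed
  qed
qed

end

lemma chain:
  assumes st: "(E1, E2) \<in> (prob_step k X)\<^sup>*" and i: "inv V E1" and fr: "fresh4 V u c x y" and XV: "X \<subseteq> V"
    and pq: "{p,q} \<in> E1"
  shows "inv V E2 \<and> (\<exists>p' q'. {p',q'} \<in> E2 \<and>
           (att E1 p q u c x y, att E2 p' q' u c x y) \<in> (prob_step (k+1) (X \<union> {x,y}))\<^sup>*)"
  using st
proof (induction rule: rtrancl_induct)
  case base thus ?case using i pq by blast
next
  case (step E2 E3)
  obtain p' q' where IH: "inv V E2" "{p',q'} \<in> E2"
    "(att E1 p q u c x y, att E2 p' q' u c x y) \<in> (prob_step (k+1) (X \<union> {x,y}))\<^sup>*"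
    using step(3) by blast
  obtain v w where vw: "k_problematic k X E2 v w" "nni_move X E2 v w E3"
    using step(2) unfolding prob_step_def by blast
  obtain v1 w1 where n: "{v,w} \<in> E2" "v \<notin> X" "w \<notin> X" "{v,v1} \<in> E2" "v1 \<noteq> w" "{w,w1} \<in> E2" "w1 \<noteq> v"
    "E3 = (E2 - {{v,v1},{w,w1}}) \<union> {{v,w1},{w,v1}}"
    using vw(2) unfolding nni_move_def by blast
  have i3: "inv V E3" using nni_inv[OF IH(1) n(8) n(1) n(4) n(5) n(6) n(7)] .
  interpret A: actx V E2 p' q' u c x y X using IH(1) fr IH(2) XV by unfold_locales
  have kp: "psum X E2 v w < int k - 2" using vw(1) unfolding kprob_iff .
  obtain p'' q'' where r: "{p'',q''} \<in> E3" "(att E2 p' q' u c x y, att E3 p'' q'' u c x y) \<in> (prob_step (k+1) (X \<union> {x,y}))\<^sup>*"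
    using A.step_all[OF n(1) n(4) n(5) n(6) n(7) n(2) n(3) kp n(8)] by blast
  show ?case using i3 r IH(3) by (meson rtrancl_trans)
qed



lemma edge_iso_image:
  assumes "inj_on g VT" "\<forall>e\<in>S. e \<subseteq> VT" "a \<in> VT" "b \<in> VT"
  shows "{a,b} \<in> S \<longleftrightarrow> {g a, g b} \<in> (image g) ` S"
proof
  assume "{a,b} \<in> S"
  hence "g ` {a,b} \<in> (image g) ` S" by (rule imageI)
  thus "{g a, g b} \<in> (image g) ` S" by simp
next
  assume "{g a, g b} \<in> (image g) ` S"
  then obtain e where e: "e \<in> S" "{g a, g b} = g ` e" by auto
  have "g ` {a,b} = g ` e" using e(2) by simp
  moreover have "{a,b} \<subseteq> VT" "e \<subseteq> VT" using assms e(1) by auto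
  ultimately have "{a,b} = e" using inj_on_image_eq_iff[OF assms(1)] by blast
  thus "{a,b} \<in> S" using e(1) by simp
qed

lemma img_E:
  assumes iso: "\<forall>a\<in>V. \<forall>b\<in>V. {a,b} \<in> E \<longleftrightarrow> {f a, f b} \<in> F" and fV: "f ` V = W"
    and wE: "wfg V E" and wF: "wfg W F"
  shows "(image f) ` E = F"
proof (rule set_eqI, rule iffI)
  fix e' assume "e' \<in> (image f) ` E"
  then obtain e where e: "e \<in> E" "e' = f ` e" by auto
  then obtain a b where ab: "e = {a,b}" "a \<in> V" "b \<in> V" using wE unfolding wfg_def by blast
  have "{f a, f b} \<in> F" using iso ab e(1) by simp
  thus "e' \<in> F" using e(2) ab(1) by simp
next
  fix e' assume e': "e' \<in> F"
  then obtain a' b' where ab: "e' = {a',b'}" "a' \<in> W" "b' \<in> W" using wF unfolding wfg_def by blast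
  obtain a b where "a \<in> V" "b \<in> V" "a' = f a" "b' = f b" using ab fV by blast
  hence "{a,b} \<in> E" using iso e' ab(1) by simp
  moreover have "e' = f ` {a,b}" using ab(1) \<open>a' = f a\<close> \<open>b' = f b\<close> by simp
  ultimately show "e' \<in> (image f) ` E" by blast
qed

theorem lemma5:
  fixes X :: "'a set" and V1 V2 :: "'a set" and E1 E2 :: "'a set set"
    and k a :: nat and x y u c :: 'a and VT :: "'a set" and ET :: "'a set set"
  assumes "infinite (UNIV :: 'a set)"
    and "k \<ge> 2" and "a \<le> 2"
    and "binary_phylo_tree X V1 E1" and "binary_phylo_tree X V2 E2"
    and "card X = 2 * k + a"
    and "x \<noteq> y" and "x \<notin> X" and "y \<notin> X"
    and "x \<notin> V2" and "y \<notin> V2"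
    and "obtainable_by_problematic k X V1 E1 V2 E2"
    and "e1 \<in> E1"
    and "attach_cherry V1 E1 e1 x y u c VT ET"
  shows "\<exists>e2\<in>E2. \<exists>u' c' VT' ET'. attach_cherry V2 E2 e2 x y u' c' VT' ET' \<and>
           obtainable_by_problematic (k + 1) (X \<union> {x, y}) VT ET VT' ET'"
proof -
  obtain p q where ac: "u \<notin> V1" "c \<notin> V1" "x \<notin> V1" "y \<notin> V1" "distinct [u,c,x,y]" "e1 = {p,q}"
    "VT = V1 \<union> {u,c,x,y}" "ET = (E1 - {e1}) \<union> {{p,u},{u,q},{u,c},{c,x},{c,y}}"
    using assms(14) unfolding attach_cherry_def by blast
  have ETatt: "ET = att E1 p q u c x y" unfolding att_def ac(8) ac(6) ..
  have f4: "fresh4 V1 u c x y" unfolding fresh4_def using ac by simp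
  have i1: "inv V1 E1" using binary_inv[OF assms(4)] .
  have XV: "X \<subseteq> V1" using assms(4) unfolding binary_phylo_tree_def phylo_tree_def by simp
  have pq: "{p,q} \<in> E1" using assms(13) ac(6) by simp
  obtain E'' where ch: "(E1,E'') \<in> (prob_step k X)\<^sup>*" and iso: "iso_X X V1 E'' V2 E2"
    using assms(12) unfolding obtainable_by_problematic_def by blast
  obtain p' q' where c1: "inv V1 E''" "{p',q'} \<in> E''"
    "(att E1 p q u c x y, att E'' p' q' u c x y) \<in> (prob_step (k+1) (X \<union> {x,y}))\<^sup>*"
    using chain[OF ch i1 f4 XV pq] by blast
  obtain f where f: "bij_betw f V1 V2" "\<forall>a\<in>V1. \<forall>b\<in>V1. {a,b} \<in> E'' \<longleftrightarrow> {f a, f b} \<in> E2" "\<forall>z\<in>X. f z = z"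
    using iso unfolding iso_X_def by blast
  have wE'': "wfg V1 E''" using c1(1) unfolding inv_def by simp
  have t2: "is_tree V2 E2" using assms(5) unfolding binary_phylo_tree_def phylo_tree_def by simp
  have wE2: "wfg V2 E2" using tree_wfg[OF t2] .
  have finV2: "finite V2" using t2 unfolding is_tree_def by simp
  have pqV: "p' \<in> V1" "q' \<in> V1" "p' \<noteq> q'" using wfg_mem[OF wE'' c1(2)] by auto
  have e2: "{f p', f q'} \<in> E2" using f(2) pqV c1(2) by simp
  obtain u' where u': "u' \<notin> V2 \<union> {x,y}"
    using ex_new_if_finite[OF assms(1)] finV2 by (metis finite_insert finite_Un finite.emptyI)
  obtain c' where c': "c' \<notin> V2 \<union> {x,y,u'}"
    using ex_new_if_finite[OF assms(1)] finV2 by (metis finite_insert finite_Un finite.emptyI)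
  define g where "g z = (if z = u then u' else if z = c then c' else if z = x then x else if z = y then y else f z)" for z
  define VT' where "VT' = V2 \<union> {u',c',x,y}"
  define ET' where "ET' = att E2 (f p') (f q') u' c' x y"
  have att2: "attach_cherry V2 E2 {f p', f q'} x y u' c' VT' ET'"
    unfolding attach_cherry_def VT'_def ET'_def att_def
    using e2 u' c' assms(7,10,11) by auto
  have gV: "\<forall>z\<in>V1. g z = f z" using ac unfolding g_def by auto
  have gu: "g u = u'" "g c = c'" "g x = x" "g y = y" using ac unfolding g_def by auto
  have fV: "f ` V1 = V2" "inj_on f V1" using f(1) unfolding bij_betw_def by auto
  have gV1: "g ` V1 = V2" using fV(1) gV by (metis image_cong)
  have injV1: "inj_on g V1" using fV(2) gV by (metis inj_on_cong)
  have img4: "g ` {u,c,x,y} = {u',c',x,y}" using gu by simp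
  have inj4: "inj_on g {u,c,x,y}" using gu ac(5) u' c' assms(7) by (auto simp: inj_on_def)
  have disj: "g ` V1 \<inter> g ` {u,c,x,y} = {}" using gV1 img4 u' c' assms(10,11) by auto
  have d14: "V1 \<inter> {u,c,x,y} = {}" using ac by auto
  have s1: "V1 - {u,c,x,y} = V1" using d14 by blast
  have s2: "{u,c,x,y} - V1 = {u,c,x,y}" using d14 by blast
  have injT: "inj_on g VT" unfolding ac(7) inj_on_Un s1 s2 using injV1 inj4 disj by (intro conjI)
  have imgT: "g ` VT = VT'" unfolding ac(7) VT'_def image_Un gV1 img4 ..
  have bij: "bij_betw g VT VT'" unfolding bij_betw_def using injT imgT by simp
  let ?S = "att E'' p' q' u c x y"
  have Ssub: "\<forall>e\<in>?S. e \<subseteq> VT" using wE'' pqV unfolding att_def ac(7) wfg_def by auto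
  have imgE: "(image g) ` E'' = E2"
  proof -
    have "(image g) ` E'' = (image f) ` E''"
    proof (rule image_cong[OF refl])
      fix e assume "e \<in> E''"
      hence "e \<subseteq> V1" using wE'' unfolding wfg_def by auto
      hence "\<forall>z\<in>e. g z = f z" using gV by blast
      thus "g ` e = f ` e" by (intro image_cong) auto
    qed
    also have "\<dots> = E2" by (rule img_E[OF f(2) fV(1) wE'' wE2])
    finally show ?thesis .
  qed
  have injE: "inj_on (image g) E''"
  proof (rule inj_onI)
    fix e1 e2 assume "e1 \<in> E''" "e2 \<in> E''" "g ` e1 = g ` e2"
    moreover hence "e1 \<subseteq> V1" "e2 \<subseteq> V1" using wE'' unfolding wfg_def by auto
    ultimately show "e1 = e2" using inj_on_image_eq_iff[OF injV1] by blast
  qed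
  have imgS: "(image g) ` ?S = ET'"
  proof -
    have "(image g) ` (E'' - {{p',q'}}) = (image g) ` E'' - (image g) ` {{p',q'}}"
      by (rule inj_on_image_set_diff[OF injE]) (use c1(2) in auto)
    also have "\<dots> = E2 - {{f p', f q'}}" using imgE gV pqV by simp
    finally have a1: "(image g) ` (E'' - {{p',q'}}) = E2 - {{f p', f q'}}" .
    have a2: "(image g) ` {{p',u},{u,q'},{u,c},{c,x},{c,y}} = {{f p',u'},{u',f q'},{u',c'},{c',x},{c',y}}"
      using gV gu pqV by simp
    show ?thesis unfolding att_def ET'_def image_Un a1 a2 ..
  qed
  have isoT: "iso_X (X \<union> {x,y}) VT ?S VT' ET'"
    unfolding iso_X_def
  proof (intro exI[of _ g] conjI ballI)
    show "bij_betw g VT VT'" by (rule bij)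
  next
    fix a b assume "a \<in> VT" "b \<in> VT"
    thus "{a,b} \<in> ?S \<longleftrightarrow> {g a, g b} \<in> ET'"
      using edge_iso_image[OF injT Ssub] imgS by simp
  next
    fix z assume z: "z \<in> X \<union> {x,y}"
    show "g z = z"
    proof (cases "z \<in> X")
      case True
      hence "z \<in> V1" using XV by auto
      thus ?thesis using gV f(3) True by simp
    next
      case False thus ?thesis using z gu by auto
    qed
  qed
  have "obtainable_by_problematic (k + 1) (X \<union> {x, y}) VT ET VT' ET'"
    unfolding obtainable_by_problematic_def ETatt using c1(3) isoT by blast
  thus ?thesis using att2 e2 by blast
qed


end
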